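(* Let $(\mathcal{A},\varphi)$ be a tracial noncommutative probability space. Let $T_1=(V_1,E_1,\gamma_1)$ and $T_2=(V_2,E_2,\gamma_2)$ be test graphs in $\mathcal{A}$ with $T_2$ two-edge-connected. Let $T_1\sharp T_2$ be the test graph obtained from disjoint copies of $T_1$ and $T_2$ by identifying an arbitrary vertex $v_1$ of $T_1$ with an arbitrary vertex $v_2$ of $T_2$. Then $\tau_\varphi[T_1\sharp T_2]=\tau_\varphi[T_1]\,\tau_\varphi[T_2]$; in particular this is independent of the choice of $v_1$ and $v_2$.
   Context: $(\mathcal{A},\varphi)$: unital complex algebra with unital tracial linear functional; free cumulants $\kappa_n$ determined by $\varphi(a_1\cdots a_n)=\sum_{\pi\in NC(n)}\prod_{B\in\pi}\kappa_{|B|}[(a_i)_{i\in B}]$. A test graph in $\mathcal{A}$ is a finite connected directed multigraph (loops, parallel edges allowed) with edge labels in $\mathcal{A}$; $T^\pi$ identifies the vertices in each block of a partition $\pi$ of the vertex set. A cactus is a connected multigraph in which every edge lies in exactly one simple cycle (loops, pairs of parallel edges count as cycles); these are its pads; an oriented cactus is one whose pads are directed cycles. $\tau^0_\varphi[T]=\prod_{C\in\mathrm{Pads}(T)}\kappa_{n_C}[\gamma(e_1),\dots,\gamma(e_{n_C})]$ if $T$ is an oriented cactus (edges of $C$ listed with $\mathrm{src}(e_i)=\mathrm{tgt}(e_{i+1})$, indices mod $n_C$), and $0$ otherwise; $\tau_\varphi[T]=\sum_{\pi}\tau^0_\varphi[T^\pi]$ over all partitions of the vertex set. A connected multigraph is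 two-edge-connected if it has no cut-edge (no single edge whose deletion disconnects it). *)

theory Defs
  imports Complex_Main "HOL-Library.Disjoint_Sets"
begin

definition complex_algebra :: "(complex \<Rightarrow> 'a::ring_1 \<Rightarrow> 'a) \<Rightarrow> bool" where
  "complex_algebra sc \<longleftrightarrow>
     (\<forall>a. sc 1 a = a) \<and>
     (\<forall>c d a. sc c (sc d a) = sc (c * d) a) \<and>
     (\<forall>c d a. sc (c + d) a = sc c a + sc d a) \<and>
     (\<forall>c a b. sc c (a + b) = sc c a + sc c b) \<and>
     (\<forall>c a b. sc c (a * b) = sc c a * b) \<and>
     (\<forall>c a b. sc c (a * b) = a * sc c b)"

definition unital_tracial_functional ::
    "(complex \<Rightarrow> 'a::ring_1 \<Rightarrow> 'a) \<Rightarrow> ('a \<Rightarrow> complex) \<Rightarrow> bool" where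
  "unital_tracial_functional sc \<phi> \<longleftrightarrow>
     (\<forall>a b. \<phi> (a + b) = \<phi> a + \<phi> b) \<and>
     (\<forall>c a. \<phi> (sc c a) = c * \<phi> a) \<and>
     \<phi> 1 = 1 \<and>
     (\<forall>a b. \<phi> (a * b) = \<phi> (b * a))"

definition noncrossing :: "nat set set \<Rightarrow> bool" where
  "noncrossing P \<longleftrightarrow>
     (\<forall>B1\<in>P. \<forall>B2\<in>P. B1 \<noteq> B2 \<longrightarrow>
        \<not> (\<exists>a b c d. a < b \<and> b < c \<and> c < d \<and> a \<in> B1 \<and> c \<in> B1 \<and> b \<in> B2 \<and> d \<in> B2))"

definition NC :: "nat \<Rightarrow> nat set set set" where
  "NC n = {P. partition_on {0..<n} P \<and> noncrossing P}"

text \<open>kappa (as : 'a list) stands for the free cumulant of order length as.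
The cumulants are determined by the moment-cumulant formula; the restriction
of the argument list to a block B (in increasing order of indices) is nths as B.\<close>
definition free_cumulants :: "('a::ring_1 \<Rightarrow> complex) \<Rightarrow> ('a list \<Rightarrow> complex) \<Rightarrow> bool" where
  "free_cumulants \<phi> \<kappa> \<longleftrightarrow>
     (\<forall>as. as \<noteq> [] \<longrightarrow>
        \<phi> (prod_list as) = (\<Sum>P\<in>NC (length as). \<Prod>B\<in>P. \<kappa> (nths as B)))"

record ('v, 'e, 'a) tgraph =
  tverts :: "'v set"
  tedges :: "'e set"
  tsrc :: "'e \<Rightarrow> 'v"
  ttgt :: "'e \<Rightarrow> 'v"
  tlab :: "'e \<Rightarrow> 'a"

definition wf_graph :: "('v, 'e, 'a) tgraph \<Rightarrow> bool" where
  "wf_graph T \<longleftrightarrow> finite (tverts T) \<and> finite (tedges T) \<and>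
     (\<forall>e\<in>tedges T. tsrc T e \<in> tverts T \<and> ttgt T e \<in> tverts T)"

definition adj_rel :: "('v, 'e, 'a) tgraph \<Rightarrow> ('v \<times> 'v) set" where
  "adj_rel T = {(u, v). \<exists>e\<in>tedges T.
      (tsrc T e = u \<and> ttgt T e = v) \<or> (tsrc T e = v \<and> ttgt T e = u)}"

definition connected_graph :: "('v, 'e, 'a) tgraph \<Rightarrow> bool" where
  "connected_graph T \<longleftrightarrow> tverts T \<noteq> {} \<and>
     (\<forall>u\<in>tverts T. \<forall>v\<in>tverts T. (u, v) \<in> (adj_rel T)\<^sup>*)"

definition test_graph :: "('v, 'e, 'a) tgraph \<Rightarrow> bool" where
  "test_graph T \<longleftrightarrow> wf_graph T \<and> connected_graph T"

definition delete_edge :: "('v, 'e, 'a) tgraph \<Rightarrow> 'e \<Rightarrow> ('v, 'e, 'a) tgraph" where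
  "delete_edge T e = T\<lparr>tedges := tedges T - {e}\<rparr>"

definition two_edge_connected :: "('v, 'e, 'a) tgraph \<Rightarrow> bool" where
  "two_edge_connected T \<longleftrightarrow> connected_graph T \<and>
     (\<forall>e\<in>tedges T. connected_graph (delete_edge T e))"

text \<open>For n = 1 this is a loop, for n = 2 a pair of parallel edges.\<close>
definition simple_cycle :: "('v, 'e, 'a) tgraph \<Rightarrow> 'e set \<Rightarrow> bool" where
  "simple_cycle T C \<longleftrightarrow> C \<subseteq> tedges T \<and>
     (\<exists>es vs. es \<noteq> [] \<and> distinct es \<and> set es = C \<and>
        length vs = length es \<and> distinct vs \<and>
        (\<forall>i<length es. {tsrc T (es ! i), ttgt T (es ! i)} =
                        {vs ! i, vs ! (Suc i mod length es)}))"

definition cactus :: "('v, 'e, 'a) tgraph \<Rightarrow> bool" where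
  "cactus T \<longleftrightarrow> connected_graph T \<and>
     (\<forall>e\<in>tedges T. \<exists>!C. simple_cycle T C \<and> e \<in> C)"

definition pads :: "('v, 'e, 'a) tgraph \<Rightarrow> 'e set set" where
  "pads T = {C. simple_cycle T C}"

definition directed_listing :: "('v, 'e, 'a) tgraph \<Rightarrow> 'e set \<Rightarrow> 'e list \<Rightarrow> bool" where
  "directed_listing T C es \<longleftrightarrow> es \<noteq> [] \<and> distinct es \<and> set es = C \<and>
     (\<forall>i<length es. tsrc T (es ! i) = ttgt T (es ! (Suc i mod length es)))"

definition oriented_cactus :: "('v, 'e, 'a) tgraph \<Rightarrow> bool" where
  "oriented_cactus T \<longleftrightarrow> cactus T \<and> (\<forall>C\<in>pads T. \<exists>es. directed_listing T C es)"

definition tau0 :: "('a list \<Rightarrow> complex) \<Rightarrow> ('v, 'e, 'a) tgraph \<Rightarrow> complex" where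
  "tau0 \<kappa> T = (if oriented_cactus T
      then (\<Prod>C\<in>pads T. \<kappa> (map (tlab T) (SOME es. directed_listing T C es)))
      else 0)"

definition block_of :: "'v set set \<Rightarrow> 'v \<Rightarrow> 'v set" where
  "block_of P v = (THE B. B \<in> P \<and> v \<in> B)"

definition quot_graph :: "('v, 'e, 'a) tgraph \<Rightarrow> 'v set set \<Rightarrow> ('v set, 'e, 'a) tgraph" where
  "quot_graph T P = \<lparr>tverts = P, tedges = tedges T,
      tsrc = (\<lambda>e. block_of P (tsrc T e)), ttgt = (\<lambda>e. block_of P (ttgt T e)),
      tlab = tlab T\<rparr>"

definition tau :: "('a list \<Rightarrow> complex) \<Rightarrow> ('v, 'e, 'a) tgraph \<Rightarrow> complex" where
  "tau \<kappa> T = (\<Sum>P\<in>{P. partition_on (tverts T) P}. tau0 \<kappa> (quot_graph T P))"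

definition glue_vertex :: "'v1 \<Rightarrow> 'v2 \<Rightarrow> 'v2 \<Rightarrow> 'v1 + 'v2" where
  "glue_vertex v1 v2 w = (if w = v2 then Inl v1 else Inr w)"

definition glue ::
    "('v1, 'e1, 'a) tgraph \<Rightarrow> 'v1 \<Rightarrow> ('v2, 'e2, 'a) tgraph \<Rightarrow> 'v2 \<Rightarrow>
     ('v1 + 'v2, 'e1 + 'e2, 'a) tgraph" where
  "glue T1 v1 T2 v2 = \<lparr>
      tverts = Inl ` tverts T1 \<union> Inr ` (tverts T2 - {v2}),
      tedges = Inl ` tedges T1 \<union> Inr ` tedges T2,
      tsrc = case_sum (\<lambda>e. Inl (tsrc T1 e)) (\<lambda>e. glue_vertex v1 v2 (tsrc T2 e)),
      ttgt = case_sum (\<lambda>e. Inl (ttgt T1 e)) (\<lambda>e. glue_vertex v1 v2 (ttgt T2 e)),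
      tlab = case_sum (tlab T1) (tlab T2)\<rparr>"

end

theory Submission
  imports Defs
begin

lemma nths_restrict: "nths xs A = nths xs (A \<inter> {..<length xs})"
  unfolding nths_def
  by (rule arg_cong[where f="map fst"], rule filter_cong) (auto simp: set_zip)

definition rot :: "nat \<Rightarrow> nat \<Rightarrow> nat" where
  "rot n i = Suc i mod n"

lemma nths_rot_Cons:
  assumes "B \<subseteq> {0..<Suc (length xs)}"
  shows "nths (x # xs) (rot (Suc (length xs)) ` B) =
           (if length xs \<in> B then [x] else []) @ nths xs B"
proof -
  let ?m = "length xs"
  have 0: "(0 \<in> rot (Suc ?m) ` B) = (?m \<in> B)"
  proof
    assume "0 \<in> rot (Suc ?m) ` B"
    then obtain i where "i \<in> B" "Suc i mod Suc ?m = 0" by (auto simp: rot_def)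
    moreover have "i \<le> ?m" using assms \<open>i \<in> B\<close> by auto
    ultimately show "?m \<in> B"
    proof (cases "i = ?m")
      case False
      then have "Suc i < Suc ?m" using \<open>i \<le> ?m\<close> by simp
      then show ?thesis using \<open>Suc i mod Suc ?m = 0\<close> by simp
    qed simp
  next
    assume "?m \<in> B" then show "0 \<in> rot (Suc ?m) ` B"
      by (force simp: rot_def)
  qed
  have 1: "{j. Suc j \<in> rot (Suc ?m) ` B} = B \<inter> {..<?m}"
  proof (intro set_eqI iffI)
    fix j assume "j \<in> {j. Suc j \<in> rot (Suc ?m) ` B}"
    then obtain i where i: "i \<in> B" "Suc i mod Suc ?m = Suc j" by (auto simp: rot_def)
    have "i \<le> ?m" using assms i by auto
    show "j \<in> B \<inter> {..<?m}"
    proof (cases "i = ?m")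
      case True then show ?thesis using i by simp
    next
      case False
      then have "Suc i < Suc ?m" using \<open>i \<le> ?m\<close> by simp
      then show ?thesis using i by simp
    qed
  next
    fix j assume "j \<in> B \<inter> {..<?m}"
    then show "j \<in> {j. Suc j \<in> rot (Suc ?m) ` B}"
      by (auto simp: rot_def image_iff intro!: bexI[where x=j])
  qed
  show ?thesis
    unfolding nths_Cons 0 1 by (metis nths_restrict)
qed

lemma nths_rotate1_Cons:
  "nths (rotate1 (x # xs)) B = nths xs B @ (if length xs \<in> B then [x] else [])"
  by (simp add: nths_append)

lemma rot_lt: "0 < n \<Longrightarrow> rot n i < n"
  by (simp add: rot_def)

lemma rot_cases:
  assumes "x < n" "rot n x = y"
  shows "(Suc x < n \<and> y = Suc x) \<or> (Suc x = n \<and> y = 0)"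
  using assms unfolding rot_def
  by (metis Suc_lessI mod_less mod_self)

lemma inj_rot: "inj_on (rot n) {0..<n}"
proof (rule inj_onI)
  fix x y assume "x \<in> {0..<n}" "y \<in> {0..<n}" "rot n x = rot n y"
  then show "x = y"
    using rot_cases[of x n "rot n x"] rot_cases[of y n "rot n y"] by auto
qed

lemma rot_image: "rot n ` {0..<n} = {0..<n}"
proof (cases "n = 0")
  case False
  show ?thesis
    by (rule endo_inj_surj) (use False rot_lt inj_rot in auto)
qed simp

lemma noncrossing_rot:
  assumes P: "partition_on {0..<n} P" and nc: "noncrossing P"
  shows "noncrossing ((`) (rot n) ` P)"
  unfolding noncrossing_def
proof (intro ballI impI notI)
  fix B1' B2' assume B1': "B1' \<in> (`) (rot n) ` P" and B2': "B2' \<in> (`) (rot n) ` P"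
    and ne: "B1' \<noteq> B2'"
    and ex: "\<exists>a b c d. a < b \<and> b < c \<and> c < d \<and> a \<in> B1' \<and> c \<in> B1' \<and> b \<in> B2' \<and> d \<in> B2'"
  obtain B1 B2 where B1: "B1 \<in> P" "B1' = rot n ` B1" and B2: "B2 \<in> P" "B2' = rot n ` B2"
    using B1' B2' by auto
  have neq: "B1 \<noteq> B2" using ne B1 B2 by auto
  have sub: "B1 \<subseteq> {0..<n}" "B2 \<subseteq> {0..<n}" using P B1 B2 partition_onD1 by blast+
  obtain a b c d where abcd: "a < b" "b < c" "c < d" "a \<in> B1'" "c \<in> B1'" "b \<in> B2'" "d \<in> B2'"
    using ex by blast
  obtain a0 where a0: "a0 \<in> B1" "rot n a0 = a" using abcd B1 by auto
  obtain b0 where b0: "b0 \<in> B2" "rot n b0 = b" using abcd B2 by auto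
  obtain c0 where c0: "c0 \<in> B1" "rot n c0 = c" using abcd B1 by auto
  obtain d0 where d0: "d0 \<in> B2" "rot n d0 = d" using abcd B2 by auto
  have lt: "a0 < n" "b0 < n" "c0 < n" "d0 < n" using a0 b0 c0 d0 sub by auto
  have bb: "Suc b0 = b" using rot_cases[OF lt(2) b0(2)] abcd by auto
  have cc: "Suc c0 = c" using rot_cases[OF lt(3) c0(2)] abcd by auto
  have dd: "Suc d0 = d" "Suc d0 < n" using rot_cases[OF lt(4) d0(2)] abcd by auto
  show False
  proof (cases "a = 0")
    case True
    then have "Suc a0 = n" using rot_cases[OF lt(1) a0(2)] by auto
    then have o: "b0 < c0 \<and> c0 < d0 \<and> d0 < a0" using bb cc dd abcd lt by auto
    have "\<not> (\<exists>a b c d. a < b \<and> b < c \<and> c < d \<and> a \<in> B2 \<and> c \<in> B2 \<and> b \<in> B1 \<and> d \<in> B1)"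
      using nc B1(1) B2(1) neq unfolding noncrossing_def by metis
    then show False using o b0 c0 d0 a0 by blast
  next
    case False
    then have "Suc a0 = a" using rot_cases[OF lt(1) a0(2)] by auto
    then have o: "a0 < b0 \<and> b0 < c0 \<and> c0 < d0" using bb cc dd abcd by auto
    have "\<not> (\<exists>a b c d. a < b \<and> b < c \<and> c < d \<and> a \<in> B1 \<and> c \<in> B1 \<and> b \<in> B2 \<and> d \<in> B2)"
      using nc B1(1) B2(1) neq unfolding noncrossing_def by metis
    then show False using o b0 c0 d0 a0 by blast
  qed
qed

lemma partition_rot:
  assumes P: "partition_on {0..<n} P"
  shows "partition_on {0..<n} ((`) (rot n) ` P)"
proof -
  have "partition_on (rot n ` {0..<n}) ((`) (rot n) ` P - {{}})"
    by (rule partition_on_inj_image[OF P inj_rot])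
  moreover have "(`) (rot n) ` P - {{}} = (`) (rot n) ` P"
    using partition_onD3[OF P] by auto
  ultimately show ?thesis by (simp add: rot_image)
qed

lemma NC_rot: "(`) ((`) (rot n)) ` NC n = NC n"
proof (rule endo_inj_surj)
  show "finite (NC n)"
    by (rule finite_subset[OF _ finitely_many_partition_on[of "{0..<n}"]]) (auto simp: NC_def)
  show "(`) ((`) (rot n)) ` NC n \<subseteq> NC n"
    using partition_rot noncrossing_rot by (auto simp: NC_def)
  have "inj_on ((`) ((`) (rot n))) (Pow (Pow {0..<n}))"
    by (intro inj_on_image_Pow inj_rot)
  moreover have "NC n \<subseteq> Pow (Pow {0..<n})"
    by (auto simp: NC_def partition_on_def)
  ultimately show "inj_on ((`) ((`) (rot n))) (NC n)"
    by (rule inj_on_subset)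
qed

lemma finite_NC: "finite (NC n)"
  by (rule finite_subset[OF _ finitely_many_partition_on[of "{0..<n}"]]) (auto simp: NC_def)

lemma top_NC: "0 < n \<Longrightarrow> {{0..<n}} \<in> NC n"
  by (auto simp: NC_def partition_on_space noncrossing_def)

lemma partition_whole_block:
  assumes "partition_on A P" "A \<in> P"
  shows "P = {A}"
proof -
  have "B = A" if "B \<in> P" for B
  proof (rule ccontr)
    assume "B \<noteq> A"
    then have "disjnt B A" using assms that unfolding partition_on_def pairwise_def by blast
    moreover have "B \<noteq> {}" "B \<subseteq> A" using assms that partition_onD3 partition_onD1 by blast+
    ultimately show False by (auto simp: disjnt_def)
  qed
  then show ?thesis using assms(2) by blast
qed

lemma kappa_rotate1:
  fixes sc :: "complex \<Rightarrow> 'a::ring_1 \<Rightarrow> 'a"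
  assumes tr: "unital_tracial_functional sc \<phi>" and fc: "free_cumulants \<phi> \<kappa>"
  shows "as \<noteq> [] \<Longrightarrow> \<kappa> (rotate1 as) = \<kappa> as"
proof (induction "length as" arbitrary: as rule: less_induct)
  case less
  obtain x xs where as: "as = x # xs" using less.prems by (cases as) auto
  define n where "n = Suc (length xs)"
  have len: "length as = n" "length (rotate1 as) = n" using as n_def by auto
  let ?r = "rot n"
  have trace: "\<phi> (prod_list (rotate1 as)) = \<phi> (prod_list as)"
    using tr as by (simp add: unital_tracial_functional_def)
  let ?F = "\<lambda>P. \<Prod>B\<in>P. \<kappa> (nths (rotate1 as) B)"
  let ?G = "\<lambda>P. \<Prod>B\<in>P. \<kappa> (nths as B)"
  have m1: "\<phi> (prod_list (rotate1 as)) = (\<Sum>P\<in>NC n. ?F P)"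
    using fc len as unfolding free_cumulants_def by (metis list.discI rotate1_is_Nil_conv)
  have m2: "\<phi> (prod_list as) = (\<Sum>P\<in>NC n. ?G P)"
    using fc len as unfolding free_cumulants_def by (metis list.discI)
  have "(\<Sum>P\<in>NC n. ?G P) = (\<Sum>P\<in>(`) ((`) ?r) ` NC n. ?G P)"
    by (simp add: NC_rot)
  also have "\<dots> = (\<Sum>P\<in>NC n. ?G ((`) ?r ` P))"
  proof (rule sum.reindex[unfolded comp_def])
    have "inj_on ((`) ((`) (rot n))) (Pow (Pow {0..<n}))"
      by (intro inj_on_image_Pow inj_rot)
    moreover have "NC n \<subseteq> Pow (Pow {0..<n})"
      by (auto simp: NC_def partition_on_def)
    ultimately show "inj_on ((`) ((`) (rot n))) (NC n)"
      by (rule inj_on_subset)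
  qed
  also have "\<dots> = (\<Sum>P\<in>NC n. \<Prod>B\<in>P. \<kappa> (nths as (?r ` B)))"
  proof (rule sum.cong[OF refl])
    fix P assume "P \<in> NC n"
    then have "P \<subseteq> Pow {0..<n}" by (auto simp: NC_def partition_on_def)
    then have "inj_on ((`) ?r) P" by (meson inj_on_image_Pow inj_on_subset inj_rot)
    then show "?G ((`) ?r ` P) = (\<Prod>B\<in>P. \<kappa> (nths as (?r ` B)))"
      by (simp add: prod.reindex)
  qed
  finally have m3: "(\<Sum>P\<in>NC n. ?G P) = (\<Sum>P\<in>NC n. \<Prod>B\<in>P. \<kappa> (nths as (?r ` B)))" .
  have key: "?F P = (\<Prod>B\<in>P. \<kappa> (nths as (?r ` B)))" if P: "P \<in> NC n" "P \<noteq> {{0..<n}}" for P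
  proof (rule prod.cong[OF refl])
    fix B assume B: "B \<in> P"
    have Bsub: "B \<subseteq> {0..<n}" using P B by (auto simp: NC_def partition_on_def)
    have "B \<noteq> {0..<n}" using P B partition_whole_block by (auto simp: NC_def)
    then have "B \<subset> {0..<n}" using Bsub by auto
    then have cB: "card B < n" by (metis card_atLeastLessThan diff_zero finite_atLeastLessThan psubset_card_mono)
    have e1: "nths as (?r ` B) = (if length xs \<in> B then [x] else []) @ nths xs B"
      using nths_rot_Cons[of B xs x] Bsub as n_def by simp
    have e2: "nths (rotate1 as) B = nths xs B @ (if length xs \<in> B then [x] else [])"
      unfolding as by (rule nths_rotate1_Cons)
    show "\<kappa> (nths (rotate1 as) B) = \<kappa> (nths as (?r ` B))"
    proof (cases "length xs \<in> B")
      case True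
      have "length (nths as (?r ` B)) = card (?r ` B)"
        using Bsub rot_lt[of n] len by (subst length_nths) (auto intro!: arg_cong[where f=card], force)
      also have "\<dots> = card B" using inj_on_subset[OF inj_rot Bsub] card_image by blast
      finally have l: "length (nths as (?r ` B)) < length as" using cB len by simp
      have "\<kappa> (rotate1 (nths as (?r ` B))) = \<kappa> (nths as (?r ` B))"
        by (rule less.hyps[OF l]) (use e1 True in simp)
      then show ?thesis using e1 e2 True by simp
    next
      case False
      then show ?thesis using e1 e2 by simp
    qed
  qed
  have n0: "0 < n" using n_def by simp
  have wholeF: "?F {{0..<n}} = \<kappa> (rotate1 as)"
    using len by (simp add: nths_all)
  have wholeG: "(\<Prod>B\<in>{{0..<n}}. \<kappa> (nths as (?r ` B))) = \<kappa> as"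
    using len by (simp add: rot_image nths_all)
  have s1: "(\<Sum>P\<in>NC n. ?F P) = \<kappa> (rotate1 as) + (\<Sum>P\<in>NC n - {{{0..<n}}}. ?F P)"
    using sum.remove[OF finite_NC top_NC[OF n0], of ?F] wholeF by simp
  have s2: "(\<Sum>P\<in>NC n. \<Prod>B\<in>P. \<kappa> (nths as (?r ` B))) = \<kappa> as +
       (\<Sum>P\<in>NC n - {{{0..<n}}}. \<Prod>B\<in>P. \<kappa> (nths as (?r ` B)))"
    using sum.remove[OF finite_NC top_NC[OF n0], of "\<lambda>P. \<Prod>B\<in>P. \<kappa> (nths as (?r ` B))"] wholeG
    by simp
  have s3: "(\<Sum>P\<in>NC n - {{{0..<n}}}. ?F P) = (\<Sum>P\<in>NC n - {{{0..<n}}}. \<Prod>B\<in>P. \<kappa> (nths as (?r ` B)))"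
    by (rule sum.cong[OF refl]) (use key in auto)
  show ?case using trace m1 m2 m3 s1 s2 s3 by simp
qed

lemma kappa_rotate:
  fixes sc :: "complex \<Rightarrow> 'a::ring_1 \<Rightarrow> 'a"
  assumes tr: "unital_tracial_functional sc \<phi>" and fc: "free_cumulants \<phi> \<kappa>"
  shows "as \<noteq> [] \<Longrightarrow> \<kappa> (rotate k as) = \<kappa> as"
  by (induction k) (auto simp: kappa_rotate1[OF tr fc])

lemma pred_mod:
  assumes "i < (n::nat)"
  shows "(i + n - 1) mod n < n" "Suc ((i + n - 1) mod n) mod n = i"
proof -
  show "(i + n - 1) mod n < n" using assms by simp
  show "Suc ((i + n - 1) mod n) mod n = i"
  proof (cases i)
    case 0
    then have "(i + n - 1) mod n = n - 1" using assms by simp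
    then show ?thesis using assms 0 by simp
  next
    case (Suc j)
    then have "i + n - 1 = j + n" by simp
    then have "(i + n - 1) mod n = j" using assms Suc by simp
    then show ?thesis using assms Suc by simp
  qed
qed

lemma suc_mod_inv:
  assumes "i < (n::nat)" "j = Suc i mod n"
  shows "i = (j + n - 1) mod n"
proof (cases "Suc i = n")
  case True
  then show ?thesis using assms by simp
next
  case False
  then have "j = Suc i" using assms by simp
  then have "j + n - 1 = i + n" by simp
  then show ?thesis using assms by simp
qed

lemma simple_cycle_props:
  assumes "simple_cycle T C" "2 \<le> card C"
  shows "\<forall>e\<in>C. tsrc T e \<noteq> ttgt T e"
    and "\<exists>e1 e2. {e\<in>C. x = tsrc T e \<or> x = ttgt T e} \<subseteq> {e1, e2}"
proof -
  obtain es vs where C: "C \<subseteq> tedges T" "es \<noteq> []" "distinct es" "set es = C"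
    "length vs = length es" "distinct vs"
    and ends: "\<forall>i<length es. {tsrc T (es ! i), ttgt T (es ! i)} = {vs ! i, vs ! (Suc i mod length es)}"
    using assms(1) unfolding simple_cycle_def by blast
  define n where "n = length es"
  have n2: "2 \<le> n" using assms(2) C distinct_card n_def by metis
  have neq: "vs ! i \<noteq> vs ! (Suc i mod n)" if "i < n" for i
  proof
    assume "vs ! i = vs ! (Suc i mod n)"
    moreover have "Suc i mod n < length vs" "i < length vs" using C n_def n2 that by auto
    ultimately have "i = Suc i mod n" using nth_eq_iff_index_eq[OF C(6)] by blast
    then show False using that n2
    proof (cases "Suc i < n")
      case False
      then have "Suc i = n" using that by simp
      then show False using \<open>i = Suc i mod n\<close> n2 by simp
    qed simp
  qed
  show "\<forall>e\<in>C. tsrc T e \<noteq> ttgt T e"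
  proof
    fix e assume "e \<in> C"
    then obtain i where i: "i < n" "e = es ! i" using C n_def by (metis in_set_conv_nth)
    show "tsrc T e \<noteq> ttgt T e"
    proof
      assume "tsrc T e = ttgt T e"
      then have "{vs ! i, vs ! (Suc i mod n)} = {tsrc T e}" using ends i n_def by auto
      then show False using neq[OF i(1)] by (metis insertI1 insert_commute singletonD)
    qed
  qed
  show "\<exists>e1 e2. {e\<in>C. x = tsrc T e \<or> x = ttgt T e} \<subseteq> {e1, e2}"
  proof (cases "x \<in> set vs")
    case False
    have "{e\<in>C. x = tsrc T e \<or> x = ttgt T e} = {}"
    proof (rule ccontr)
      assume "{e\<in>C. x = tsrc T e \<or> x = ttgt T e} \<noteq> {}"
      then obtain e where "e \<in> C" "x = tsrc T e \<or> x = ttgt T e" by blast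
      then obtain i where i: "i < n" "e = es ! i" "x = tsrc T e \<or> x = ttgt T e" using C n_def by (metis in_set_conv_nth)
      then have "x \<in> {vs ! i, vs ! (Suc i mod n)}" using ends n_def by blast
      moreover have "Suc i mod n < length vs" using C n_def n2 by simp
      moreover have "vs ! i \<in> set vs" using i C n_def by simp
      moreover have "vs ! (Suc i mod n) \<in> set vs" using \<open>Suc i mod n < length vs\<close> by simp
      ultimately show False using False by blast
    qed
    then show ?thesis by blast
  next
    case True
    then obtain j where j: "j < n" "x = vs ! j" using C n_def by (metis in_set_conv_nth)
    show ?thesis
    proof (rule exI[of _ "es ! j"], rule exI[of _ "es ! ((j + n - 1) mod n)"], rule subsetI)
      fix e assume "e \<in> {e\<in>C. x = tsrc T e \<or> x = ttgt T e}"
      then have "e \<in> set es" "x = tsrc T e \<or> x = ttgt T e" using C by auto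
      then obtain i where i: "i < n" "e = es ! i" "x = tsrc T e \<or> x = ttgt T e" using n_def by (metis in_set_conv_nth)
      then have "x \<in> {vs ! i, vs ! (Suc i mod n)}" using ends n_def by blast
      then have "vs ! j = vs ! i \<or> vs ! j = vs ! (Suc i mod n)" using j by simp
      moreover have "Suc i mod n < length vs" "i < length vs" "j < length vs" using C n_def n2 i j by auto
      ultimately have "j = i \<or> j = Suc i mod n" by (simp add: nth_eq_iff_index_eq[OF C(6)])
      then have "i = j \<or> i = (j + n - 1) mod n"
      proof
        assume "j = Suc i mod n"
        then show ?thesis using i(1) suc_mod_inv by blast
      qed auto
      then show "e \<in> {es ! j, es ! ((j + n - 1) mod n)}" using i by auto
    qed
  qed
qed

lemma listing_tgt_inj:
  assumes "simple_cycle T C" "directed_listing T C es" "2 \<le> card C"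
  shows "inj_on (ttgt T) C"
proof (rule inj_onI, rule ccontr)
  fix e f assume e: "e \<in> C" and f: "f \<in> C" and eq: "ttgt T e = ttgt T f" and ne: "e \<noteq> f"
  have es: "es \<noteq> []" "distinct es" "set es = C"
    and lst: "\<forall>i<length es. tsrc T (es ! i) = ttgt T (es ! (Suc i mod length es))"
    using assms(2) unfolding directed_listing_def by auto
  define n where "n = length es"
  have n2: "2 \<le> n" using assms(3) es distinct_card n_def by metis
  define x where "x = ttgt T e"
  obtain e1 e2 where inc: "{e\<in>C. x = tsrc T e \<or> x = ttgt T e} \<subseteq> {e1, e2}"
    using simple_cycle_props(2)[OF assms(1,3)] by blast
  have noloop: "\<forall>e\<in>C. tsrc T e \<noteq> ttgt T e" using simple_cycle_props(1)[OF assms(1,3)] .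
  have "e \<in> {e1, e2}" "f \<in> {e1, e2}" using inc e f eq x_def by auto
  then have ef: "{e1, e2} = {e, f}" using ne by blast
  obtain i where i: "i < n" "e = es ! i" using e es n_def by (metis in_set_conv_nth)
  define k where "k = (i + n - 1) mod n"
  have k: "k < n" "Suc k mod n = i" using pred_mod[OF i(1)] unfolding k_def by auto
  have "tsrc T (es ! k) = x" using lst k i n_def x_def by auto
  moreover have "es ! k \<in> C" using k es n_def by auto
  ultimately have "es ! k \<in> {e, f}" using inc ef by auto
  then have "ttgt T (es ! k) = x" using eq x_def by auto
  then show False using noloop \<open>es ! k \<in> C\<close> \<open>tsrc T (es ! k) = x\<close> by auto
qed

lemma listing_rotate:
  assumes sc: "simple_cycle T C" and l1: "directed_listing T C es" and l2: "directed_listing T C es'"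
  shows "\<exists>k. es' = rotate k es"
proof -
  have es: "es \<noteq> []" "distinct es" "set es = C"
    and lst: "\<forall>i<length es. tsrc T (es ! i) = ttgt T (es ! (Suc i mod length es))"
    using l1 unfolding directed_listing_def by auto
  have es': "es' \<noteq> []" "distinct es'" "set es' = C"
    and lst': "\<forall>i<length es'. tsrc T (es' ! i) = ttgt T (es' ! (Suc i mod length es'))"
    using l2 unfolding directed_listing_def by auto
  define n where "n = length es"
  have len: "length es' = n" using es es' n_def by (metis distinct_card)
  have n0: "0 < n" using es n_def by auto
  obtain k where k: "k < n" "es' ! 0 = es ! k"
    using es es' n0 len n_def by (metis in_set_conv_nth nth_mem)
  have claim: "i < n \<Longrightarrow> es' ! i = es ! ((k + i) mod n)" for i
  proof (induction i)
    case 0 then show ?case using k by simp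
  next
    case (Suc i)
    then have n2: "2 \<le> n" by simp
    have inj: "inj_on (ttgt T) C"
      by (rule listing_tgt_inj[OF sc l1]) (use n2 es n_def distinct_card in metis)
    have "ttgt T (es' ! Suc i) = tsrc T (es' ! i)" using lst' Suc.prems len by simp
    also have "\<dots> = tsrc T (es ! ((k + i) mod n))" using Suc by simp
    also have "\<dots> = ttgt T (es ! (Suc ((k + i) mod n) mod n))" using lst n0 n_def by simp
    also have "Suc ((k + i) mod n) mod n = (k + Suc i) mod n" by (simp add: mod_Suc_eq)
    finally have "ttgt T (es' ! Suc i) = ttgt T (es ! ((k + Suc i) mod n))" .
    moreover have "es' ! Suc i \<in> C" using Suc.prems len es' by auto
    moreover have "es ! ((k + Suc i) mod n) \<in> C" using n0 es n_def by auto
    ultimately show ?case using inj inj_onD by metis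
  qed
  have "es' = rotate k es"
    by (rule nth_equalityI) (use len n_def claim in \<open>auto simp: nth_rotate\<close>)
  then show ?thesis by blast
qed

lemma listing_value:
  fixes sc :: "complex \<Rightarrow> 'a::ring_1 \<Rightarrow> 'a"
  assumes tr: "unital_tracial_functional sc \<phi>" and fc: "free_cumulants \<phi> \<kappa>"
    and sc: "simple_cycle T C" and l1: "directed_listing T C es" and l2: "directed_listing T C es'"
  shows "\<kappa> (map (tlab T) es') = \<kappa> (map (tlab T) es)"
proof -
  obtain k where "es' = rotate k es" using listing_rotate[OF sc l1 l2] by blast
  moreover have "map (tlab T) es \<noteq> []" using l1 by (auto simp: directed_listing_def)
  ultimately show ?thesis using kappa_rotate[OF tr fc] by (simp add: rotate_map[symmetric])
qed

definition giso :: "('v, 'e, 'a) tgraph \<Rightarrow> ('w, 'f, 'a) tgraph \<Rightarrow> ('v \<Rightarrow> 'w) \<Rightarrow> ('e \<Rightarrow> 'f) \<Rightarrow> bool" where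
  "giso H H' f g \<longleftrightarrow> bij_betw f (tverts H) (tverts H') \<and> bij_betw g (tedges H) (tedges H') \<and>
     (\<forall>e\<in>tedges H. tsrc H' (g e) = f (tsrc H e) \<and> ttgt H' (g e) = f (ttgt H e) \<and> tlab H' (g e) = tlab H e) \<and>
     (\<forall>e\<in>tedges H. tsrc H e \<in> tverts H \<and> ttgt H e \<in> tverts H)"

lemma giso_sym:
  assumes "giso H H' f g"
  shows "giso H' H (inv_into (tverts H) f) (inv_into (tedges H) g)"
proof -
  have bf: "bij_betw f (tverts H) (tverts H')" and bg: "bij_betw g (tedges H) (tedges H')"
    and c: "\<forall>e\<in>tedges H. tsrc H' (g e) = f (tsrc H e) \<and> ttgt H' (g e) = f (ttgt H e) \<and> tlab H' (g e) = tlab H e"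
    and w: "\<forall>e\<in>tedges H. tsrc H e \<in> tverts H \<and> ttgt H e \<in> tverts H"
    using assms unfolding giso_def by auto
  let ?f = "inv_into (tverts H) f" and ?g = "inv_into (tedges H) g"
  have 1: "bij_betw ?f (tverts H') (tverts H)" by (rule bij_betw_inv_into[OF bf])
  have 2: "bij_betw ?g (tedges H') (tedges H)" by (rule bij_betw_inv_into[OF bg])
  have 3: "tsrc H (?g e') = ?f (tsrc H' e') \<and> ttgt H (?g e') = ?f (ttgt H' e') \<and> tlab H (?g e') = tlab H' e'"
    if e': "e' \<in> tedges H'" for e'
  proof -
    obtain e where e: "e \<in> tedges H" "e' = g e" using e' bg by (auto simp: bij_betw_def)
    have ge: "?g e' = e" using e bg by (simp add: bij_betw_def)
    have "?f (f (tsrc H e)) = tsrc H e" "?f (f (ttgt H e)) = ttgt H e"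
      using w e bf by (auto simp: bij_betw_def)
    then show ?thesis using c e ge by auto
  qed
  have 4: "tsrc H' e' \<in> tverts H' \<and> ttgt H' e' \<in> tverts H'" if e': "e' \<in> tedges H'" for e'
  proof -
    obtain e where e: "e \<in> tedges H" "e' = g e" using e' bg by (auto simp: bij_betw_def)
    then show ?thesis using c w bf by (auto simp: bij_betw_def)
  qed
  show ?thesis unfolding giso_def using 1 2 3 4 by blast
qed

lemma giso_cycle:
  assumes iso: "giso H H' f g" and sc: "simple_cycle H C"
  shows "simple_cycle H' (g ` C)"
proof -
  have bf: "bij_betw f (tverts H) (tverts H')" and bg: "bij_betw g (tedges H) (tedges H')"
    and c: "\<forall>e\<in>tedges H. tsrc H' (g e) = f (tsrc H e) \<and> ttgt H' (g e) = f (ttgt H e) \<and> tlab H' (g e) = tlab H e"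
    and w: "\<forall>e\<in>tedges H. tsrc H e \<in> tverts H \<and> ttgt H e \<in> tverts H"
    using iso unfolding giso_def by auto
  obtain es vs where C: "C \<subseteq> tedges H" "es \<noteq> []" "distinct es" "set es = C"
    "length vs = length es" "distinct vs"
    and ends: "\<forall>i<length es. {tsrc H (es ! i), ttgt H (es ! i)} = {vs ! i, vs ! (Suc i mod length es)}"
    using sc unfolding simple_cycle_def by blast
  have vsV: "set vs \<subseteq> tverts H"
  proof
    fix v assume "v \<in> set vs"
    then obtain i where i: "i < length vs" "v = vs ! i" by (metis in_set_conv_nth)
    then have "v \<in> {tsrc H (es ! i), ttgt H (es ! i)}" using ends C by auto
    moreover have "es ! i \<in> tedges H" using C i by auto
    ultimately show "v \<in> tverts H" using w by auto
  qed
  have "g ` C \<subseteq> tedges H'" using C bg by (auto simp: bij_betw_def)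
  moreover have "distinct (map g es)" using C bg by (auto simp: bij_betw_def distinct_map intro: inj_on_subset)
  moreover have "distinct (map f vs)" using C vsV bf by (auto simp: bij_betw_def distinct_map intro: inj_on_subset)
  moreover have "\<forall>i<length (map g es). {tsrc H' (map g es ! i), ttgt H' (map g es ! i)} =
                     {map f vs ! i, map f vs ! (Suc i mod length (map g es))}"
  proof (intro allI impI)
    fix i assume i: "i < length (map g es)"
    have ei: "es ! i \<in> tedges H" using C i by auto
    have "Suc i mod length es < length vs" using C by simp
    then have "{tsrc H' (map g es ! i), ttgt H' (map g es ! i)} = f ` {tsrc H (es ! i), ttgt H (es ! i)}"
      using c ei i by auto
    also have "\<dots> = f ` {vs ! i, vs ! (Suc i mod length es)}" using ends i by auto
    also have "\<dots> = {map f vs ! i, map f vs ! (Suc i mod length (map g es))}"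
      using C i by auto
    finally show "{tsrc H' (map g es ! i), ttgt H' (map g es ! i)} =
                     {map f vs ! i, map f vs ! (Suc i mod length (map g es))}" .
  qed
  ultimately show ?thesis unfolding simple_cycle_def
    using C by (intro conjI exI[of _ "map g es"] exI[of _ "map f vs"]) auto
qed

lemma giso_listing:
  assumes iso: "giso H H' f g" and sub: "C \<subseteq> tedges H" and dl: "directed_listing H C es"
  shows "directed_listing H' (g ` C) (map g es)"
proof -
  have bg: "bij_betw g (tedges H) (tedges H')"
    and c: "\<forall>e\<in>tedges H. tsrc H' (g e) = f (tsrc H e) \<and> ttgt H' (g e) = f (ttgt H e) \<and> tlab H' (g e) = tlab H e"
    using iso unfolding giso_def by auto
  have es: "es \<noteq> []" "distinct es" "set es = C"
    and lst: "\<forall>i<length es. tsrc H (es ! i) = ttgt H (es ! (Suc i mod length es))"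
    using dl unfolding directed_listing_def by auto
  have "distinct (map g es)" using es sub bg by (auto simp: bij_betw_def distinct_map intro: inj_on_subset)
  moreover have "\<forall>i<length (map g es). tsrc H' (map g es ! i) = ttgt H' (map g es ! (Suc i mod length (map g es)))"
  proof (intro allI impI)
    fix i assume i: "i < length (map g es)"
    have "es ! i \<in> tedges H" "es ! (Suc i mod length es) \<in> tedges H" using es sub i by auto
    then show "tsrc H' (map g es ! i) = ttgt H' (map g es ! (Suc i mod length (map g es)))"
      using c lst i es by auto
  qed
  ultimately show ?thesis using es unfolding directed_listing_def by auto
qed

lemma giso_connected:
  assumes iso: "giso H H' f g" and con: "connected_graph H"
  shows "connected_graph H'"
proof -
  have bf: "bij_betw f (tverts H) (tverts H')" and bg: "bij_betw g (tedges H) (tedges H')"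
    and c: "\<forall>e\<in>tedges H. tsrc H' (g e) = f (tsrc H e) \<and> ttgt H' (g e) = f (ttgt H e) \<and> tlab H' (g e) = tlab H e"
    using iso unfolding giso_def by auto
  have step: "(u, v) \<in> (adj_rel H)\<^sup>* \<Longrightarrow> (f u, f v) \<in> (adj_rel H')\<^sup>*" for u v
  proof (induction rule: rtrancl_induct)
    case (step y z)
    then obtain e where e: "e \<in> tedges H" "(tsrc H e = y \<and> ttgt H e = z) \<or> (tsrc H e = z \<and> ttgt H e = y)"
      unfolding adj_rel_def by auto
    have "g e \<in> tedges H'" using e bg by (auto simp: bij_betw_def)
    then have "(f y, f z) \<in> adj_rel H'" using e c unfolding adj_rel_def by force
    then show ?case using step by auto
  qed simp
  show ?thesis unfolding connected_graph_def
  proof (intro conjI ballI)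
    show "tverts H' \<noteq> {}" using con bf unfolding connected_graph_def bij_betw_def by auto
  next
    fix u' v' assume "u' \<in> tverts H'" "v' \<in> tverts H'"
    then obtain u v where "u \<in> tverts H" "v \<in> tverts H" "u' = f u" "v' = f v" using bf unfolding bij_betw_def by blast
    then show "(u', v') \<in> (adj_rel H')\<^sup>*" using step con unfolding connected_graph_def by auto
  qed
qed

lemma giso_back:
  assumes iso: "giso H H' f g" and sub: "C' \<subseteq> tedges H'"
  shows "g ` (inv_into (tedges H) g ` C') = C'"
proof -
  have bg: "bij_betw g (tedges H) (tedges H')" using iso unfolding giso_def by auto
  show ?thesis using sub bg by (force simp: bij_betw_def f_inv_into_f image_iff)
qed

lemma simple_cycle_sub: "simple_cycle H C \<Longrightarrow> C \<subseteq> tedges H"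
  by (simp add: simple_cycle_def)

lemma giso_pads:
  assumes iso: "giso H H' f g"
  shows "pads H' = (`) g ` pads H"
proof (intro set_eqI iffI)
  fix C' assume "C' \<in> pads H'"
  then have sc: "simple_cycle H' C'" by (simp add: pads_def)
  have "simple_cycle H (inv_into (tedges H) g ` C')" by (rule giso_cycle[OF giso_sym[OF iso] sc])
  moreover have "C' = g ` (inv_into (tedges H) g ` C')" using giso_back[OF iso simple_cycle_sub[OF sc]] by simp
  ultimately show "C' \<in> (`) g ` pads H" by (auto simp: pads_def)
next
  fix C' assume "C' \<in> (`) g ` pads H"
  then show "C' \<in> pads H'" using giso_cycle[OF iso] by (auto simp: pads_def)
qed

lemma giso_cactus:
  assumes iso: "giso H H' f g" and ca: "cactus H"
  shows "cactus H'"
  unfolding cactus_def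
proof (intro conjI ballI)
  show "connected_graph H'" using giso_connected[OF iso] ca by (simp add: cactus_def)
next
  fix e' assume e': "e' \<in> tedges H'"
  have bg: "bij_betw g (tedges H) (tedges H')" using iso unfolding giso_def by auto
  obtain e where e: "e \<in> tedges H" "e' = g e" using e' bg by (auto simp: bij_betw_def)
  let ?g = "inv_into (tedges H) g"
  have ge: "?g e' = e" using e bg by (simp add: bij_betw_def)
  obtain C where C: "simple_cycle H C" "e \<in> C" and uq: "\<And>C2. simple_cycle H C2 \<and> e \<in> C2 \<Longrightarrow> C2 = C"
    using ca e unfolding cactus_def by metis
  show "\<exists>!C'. simple_cycle H' C' \<and> e' \<in> C'"
  proof (rule ex1I[of _ "g ` C"])
    show "simple_cycle H' (g ` C) \<and> e' \<in> g ` C" using giso_cycle[OF iso C(1)] C e by auto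
  next
    fix C' assume C': "simple_cycle H' C' \<and> e' \<in> C'"
    have "simple_cycle H (?g ` C')" using giso_cycle[OF giso_sym[OF iso]] C' by auto
    moreover have "e \<in> ?g ` C'" using C' ge by force
    ultimately have "?g ` C' = C" using uq by auto
    then show "C' = g ` C" using giso_back[OF iso simple_cycle_sub] C' by metis
  qed
qed

lemma giso_oriented:
  assumes iso: "giso H H' f g" and oc: "oriented_cactus H"
  shows "oriented_cactus H'"
  unfolding oriented_cactus_def
proof (intro conjI ballI)
  show "cactus H'" using giso_cactus[OF iso] oc by (simp add: oriented_cactus_def)
next
  fix C' assume "C' \<in> pads H'"
  then obtain C where C: "C \<in> pads H" "C' = g ` C" using giso_pads[OF iso] by auto
  then obtain es where "directed_listing H C es" using oc by (auto simp: oriented_cactus_def)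
  moreover have "C \<subseteq> tedges H" using C simple_cycle_sub by (auto simp: pads_def)
  ultimately show "\<exists>es. directed_listing H' C' es"
    using giso_listing[OF iso] C by blast
qed

lemma finite_pads: "finite (tedges H) \<Longrightarrow> finite (pads H)"
  by (rule finite_subset[of _ "Pow (tedges H)"]) (auto simp: pads_def simple_cycle_def)

lemma tau0_iso:
  fixes sc :: "complex \<Rightarrow> 'a::ring_1 \<Rightarrow> 'a"
  assumes tr: "unital_tracial_functional sc \<phi>" and fc: "free_cumulants \<phi> \<kappa>"
    and iso: "giso H H' f g"
  shows "tau0 \<kappa> H' = tau0 \<kappa> H"
proof (cases "oriented_cactus H")
  case False
  then have "\<not> oriented_cactus H'" using giso_oriented[OF giso_sym[OF iso]] by blast
  then show ?thesis using False by (simp add: tau0_def)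
next
  case True
  then have oc': "oriented_cactus H'" using giso_oriented[OF iso] by blast
  have bg: "bij_betw g (tedges H) (tedges H')"
    and c: "\<forall>e\<in>tedges H. tsrc H' (g e) = f (tsrc H e) \<and> ttgt H' (g e) = f (ttgt H e) \<and> tlab H' (g e) = tlab H e"
    using iso unfolding giso_def by auto
  let ?g = "inv_into (tedges H) g"
  have inj: "inj_on ((`) g) (pads H)"
  proof -
    have "inj_on ((`) g) (Pow (tedges H))" using bg by (intro inj_on_image_Pow) (simp add: bij_betw_def)
    moreover have "pads H \<subseteq> Pow (tedges H)" by (auto simp: pads_def simple_cycle_def)
    ultimately show ?thesis by (rule inj_on_subset)
  qed
  have "(\<Prod>C'\<in>pads H'. \<kappa> (map (tlab H') (SOME es. directed_listing H' C' es))) =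
        (\<Prod>C\<in>pads H. \<kappa> (map (tlab H') (SOME es. directed_listing H' (g ` C) es)))"
    unfolding giso_pads[OF iso] by (simp add: prod.reindex[OF inj])
  also have "\<dots> = (\<Prod>C\<in>pads H. \<kappa> (map (tlab H) (SOME es. directed_listing H C es)))"
  proof (rule prod.cong[OF refl])
    fix C assume C: "C \<in> pads H"
    have scC: "simple_cycle H C" and Csub: "C \<subseteq> tedges H" using C by (auto simp: pads_def simple_cycle_def)
    have "g ` C \<in> pads H'" using C giso_pads[OF iso] by auto
    then have "\<exists>es. directed_listing H' (g ` C) es" using oc' by (auto simp: oriented_cactus_def)
    then have l1: "directed_listing H' (g ` C) (SOME es. directed_listing H' (g ` C) es)" by (rule someI_ex)
    define es' where "es' = (SOME es. directed_listing H' (g ` C) es)"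
    have sub': "g ` C \<subseteq> tedges H'" using Csub bg by (auto simp: bij_betw_def)
    have "directed_listing H (?g ` (g ` C)) (map ?g es')"
      using giso_listing[OF giso_sym[OF iso] sub'] l1 es'_def by simp
    moreover have "?g ` (g ` C) = C" using Csub bg by (simp add: bij_betw_def inv_into_image_cancel)
    ultimately have l2: "directed_listing H C (map ?g es')" by simp
    have "\<exists>es. directed_listing H C es" using True C by (auto simp: oriented_cactus_def)
    then have l3: "directed_listing H C (SOME es. directed_listing H C es)" by (rule someI_ex)
    have setes: "set es' \<subseteq> tedges H'" using l1 sub' es'_def by (simp add: directed_listing_def)
    have "map (tlab H') es' = map (tlab H) (map ?g es')"
    proof -
      have "tlab H' e' = tlab H (?g e')" if "e' \<in> set es'" for e'
      proof -
        have e'E: "e' \<in> tedges H'" using that setes by auto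
        then have "?g e' \<in> tedges H" "g (?g e') = e'" using bg by (auto simp: bij_betw_def inv_into_into f_inv_into_f)
        then show ?thesis using c by metis
      qed
      then show ?thesis by simp
    qed
    also have "\<kappa> \<dots> = \<kappa> (map (tlab H) (SOME es. directed_listing H C es))"
      by (rule listing_value[OF tr fc scC l3 l2])
    finally show "\<kappa> (map (tlab H') (SOME es. directed_listing H' (g ` C) es)) =
                  \<kappa> (map (tlab H) (SOME es. directed_listing H C es))" using es'_def by simp
  qed
  finally show ?thesis using True oc' by (simp add: tau0_def)
qed

definition adjX :: "('v, 'e, 'a) tgraph \<Rightarrow> 'e set \<Rightarrow> ('v \<times> 'v) set" where
  "adjX H X = {(u, v). \<exists>e\<in>X. (tsrc H e = u \<and> ttgt H e = v) \<or> (tsrc H e = v \<and> ttgt H e = u)}"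

definition is_path :: "('v, 'e, 'a) tgraph \<Rightarrow> 'e set \<Rightarrow> 'v list \<Rightarrow> 'e list \<Rightarrow> bool" where
  "is_path H X vs es \<longleftrightarrow> length vs = Suc (length es) \<and>
     (\<forall>i<length es. es ! i \<in> X \<and> {tsrc H (es ! i), ttgt H (es ! i)} = {vs ! i, vs ! Suc i})"

lemma is_path_take:
  assumes "is_path H X vs es" "k \<le> length es"
  shows "is_path H X (take (Suc k) vs) (take k es)"
  using assms unfolding is_path_def by auto

lemma is_path_snoc:
  assumes "is_path H X vs es" "e \<in> X" "{tsrc H e, ttgt H e} = {last vs, z}"
  shows "is_path H X (vs @ [z]) (es @ [e])"
proof -
  have lv: "last vs = vs ! length es" using assms(1) unfolding is_path_def
    by (metis diff_Suc_1 last_conv_nth list.size(3) nat.distinct(1))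
  show ?thesis unfolding is_path_def
  proof (rule conjI[OF _ allI[OF impI]])
    show "length (vs @ [z]) = Suc (length (es @ [e]))" using assms(1) by (simp add: is_path_def)
  next
    fix i assume i: "i < length (es @ [e])"
    show "(es @ [e]) ! i \<in> X \<and> {tsrc H ((es @ [e]) ! i), ttgt H ((es @ [e]) ! i)} = {(vs @ [z]) ! i, (vs @ [z]) ! Suc i}"
    proof (cases "i < length es")
      case True
      then show ?thesis using assms(1) by (simp add: is_path_def nth_append)
    next
      case False
      then have "i = length es" using i by simp
      then show ?thesis using assms lv by (simp add: is_path_def nth_append)
    qed
  qed
qed

lemma is_path_append:
  assumes p1: "is_path H X vs1 es1" and p2: "is_path H Y vs2 es2" and eq: "last vs1 = hd vs2"
  shows "is_path H (X \<union> Y) (vs1 @ tl vs2) (es1 @ es2)"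
proof -
  have l1: "length vs1 = Suc (length es1)" and l2: "length vs2 = Suc (length es2)"
    using p1 p2 by (auto simp: is_path_def)
  have lv: "vs1 ! length es1 = vs2 ! 0" using eq l1 l2
    by (metis diff_Suc_1 hd_conv_nth last_conv_nth list.size(3) nat.distinct(1))
  show ?thesis unfolding is_path_def
  proof (rule conjI[OF _ allI[OF impI]])
    show "length (vs1 @ tl vs2) = Suc (length (es1 @ es2))" using l1 l2 by simp
  next
    fix i assume i: "i < length (es1 @ es2)"
    show "(es1 @ es2) ! i \<in> X \<union> Y \<and> {tsrc H ((es1 @ es2) ! i), ttgt H ((es1 @ es2) ! i)} =
          {(vs1 @ tl vs2) ! i, (vs1 @ tl vs2) ! Suc i}"
    proof (cases "i < length es1")
      case True
      have a: "(vs1 @ tl vs2) ! i = vs1 ! i" using True l1 by (simp add: nth_append)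
      have b: "(vs1 @ tl vs2) ! Suc i = vs1 ! Suc i" using True l1 by (simp add: nth_append)
      show ?thesis using p1 True a b by (simp add: is_path_def nth_append)
    next
      case False
      define m where "m = i - length es1"
      have m: "i = length es1 + m" "m < length es2" using False i m_def by auto
      have a: "(vs1 @ tl vs2) ! i = vs2 ! m"
      proof (cases m)
        case 0 then show ?thesis using m l1 lv by (simp add: nth_append)
      next
        case (Suc m') then show ?thesis using m l1 l2 by (simp add: nth_append nth_tl)
      qed
      have b: "(vs1 @ tl vs2) ! Suc i = vs2 ! Suc m" using m l1 l2 by (simp add: nth_append nth_tl)
      show ?thesis using p2 m a b by (simp add: is_path_def nth_append)
    qed
  qed
qed

lemma is_path_mono: "is_path H X vs es \<Longrightarrow> X \<subseteq> Y \<Longrightarrow> is_path H Y vs es"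
  unfolding is_path_def by blast

lemma is_path_edges: "is_path H X vs es \<Longrightarrow> set es \<subseteq> X"
  unfolding is_path_def by (auto simp: in_set_conv_nth)

lemma is_path_distinct_edges:
  assumes "is_path H X vs es" "distinct vs"
  shows "distinct es"
proof (rule distinct_conv_nth[THEN iffD2], intro allI impI)
  fix i j assume ij: "i < length es" "j < length es" "i \<noteq> j"
  show "es ! i \<noteq> es ! j"
  proof
    assume eq: "es ! i = es ! j"
    have "{vs ! i, vs ! Suc i} = {vs ! j, vs ! Suc j}" using assms(1) ij eq by (metis is_path_def)
    moreover have lv: "length vs = Suc (length es)" using assms(1) by (simp add: is_path_def)
    ultimately have "vs ! i = vs ! j \<or> vs ! i = vs ! Suc j" by auto
    then have "i = j \<or> i = Suc j" using assms(2) ij lv by (auto simp: nth_eq_iff_index_eq)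
    moreover have "vs ! Suc i = vs ! j \<or> vs ! Suc i = vs ! Suc j"
      using \<open>{vs ! i, vs ! Suc i} = {vs ! j, vs ! Suc j}\<close> by auto
    then have "Suc i = j \<or> Suc i = Suc j" using assms(2) ij lv by (auto simp: nth_eq_iff_index_eq)
    ultimately show False using ij by auto
  qed
qed

lemma is_path_verts:
  assumes "is_path H X vs es" "es \<noteq> []" "\<forall>e\<in>X. tsrc H e \<in> W \<and> ttgt H e \<in> W"
  shows "set vs \<subseteq> W"
proof
  fix v assume "v \<in> set vs"
  then obtain i where i: "i < length vs" "v = vs ! i" by (metis in_set_conv_nth)
  have lv: "length vs = Suc (length es)" using assms(1) by (simp add: is_path_def)
  show "v \<in> W"
  proof (cases "i < length es")
    case True
    then have "es ! i \<in> X" "v \<in> {tsrc H (es ! i), ttgt H (es ! i)}" using assms(1) i by (auto simp: is_path_def)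
    then show ?thesis using assms(3) by auto
  next
    case False
    then have "i = Suc (length es - 1)" "length es - 1 < length es" using i lv assms(2) by auto
    then have "es ! (length es - 1) \<in> X" "v \<in> {tsrc H (es ! (length es - 1)), ttgt H (es ! (length es - 1))}"
      using assms(1) i by (auto simp: is_path_def)
    then show ?thesis using assms(3) by auto
  qed
qed

lemma rtrancl_simple_path:
  assumes "(x, y) \<in> (adjX H X)\<^sup>*"
  shows "\<exists>vs es. is_path H X vs es \<and> hd vs = x \<and> last vs = y \<and> distinct vs"
  using assms
proof (induction rule: rtrancl_induct)
  case base
  show ?case by (rule exI[of _ "[x]"], rule exI[of _ "[]"]) (simp add: is_path_def)
next
  case (step y z)
  then obtain vs es where p: "is_path H X vs es" "hd vs = x" "last vs = y" "distinct vs" by blast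
  obtain e where e: "e \<in> X" "{tsrc H e, ttgt H e} = {y, z}" using step(2) unfolding adjX_def by auto
  have lv: "length vs = Suc (length es)" using p by (simp add: is_path_def)
  show ?case
  proof (cases "z \<in> set vs")
    case True
    then obtain k where k: "k < length vs" "vs ! k = z" by (metis in_set_conv_nth)
    have "is_path H X (take (Suc k) vs) (take k es)" using is_path_take[OF p(1)] k lv by simp
    moreover have "hd (take (Suc k) vs) = x" using p lv by simp
    moreover have "last (take (Suc k) vs) = z" using k by (simp add: take_Suc_conv_app_nth)
    moreover have "distinct (take (Suc k) vs)" using p by simp
    ultimately show ?thesis by blast
  next
    case False
    have "is_path H X (vs @ [z]) (es @ [e])" using is_path_snoc[OF p(1) e(1)] e p by simp
    moreover have "hd (vs @ [z]) = x" using p lv by (cases vs) auto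
    moreover have "distinct (vs @ [z])" using p False by simp
    ultimately show ?thesis by auto
  qed
qed

lemma closed_path_cycle:
  assumes p: "is_path H X vs es" and ne: "es \<noteq> []" and cl: "hd vs = last vs"
    and d: "distinct (butlast vs)" and de: "distinct es" and X: "X \<subseteq> tedges H"
  shows "simple_cycle H (set es)"
  unfolding simple_cycle_def
proof (intro conjI exI[of _ es] exI[of _ "butlast vs"])
  have lv: "length vs = Suc (length es)" using p by (simp add: is_path_def)
  show "set es \<subseteq> tedges H" using is_path_edges[OF p] X by auto
  show "es \<noteq> []" "distinct es" "set es = set es" "distinct (butlast vs)" using ne de d by auto
  show "length (butlast vs) = length es" using lv by simp
  show "\<forall>i<length es. {tsrc H (es ! i), ttgt H (es ! i)} = {butlast vs ! i, butlast vs ! (Suc i mod length es)}"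
  proof (intro allI impI)
    fix i assume i: "i < length es"
    have "{tsrc H (es ! i), ttgt H (es ! i)} = {vs ! i, vs ! Suc i}" using p i by (simp add: is_path_def)
    moreover have "butlast vs ! i = vs ! i" using i lv by (simp add: nth_butlast)
    moreover have "butlast vs ! (Suc i mod length es) = vs ! Suc i"
    proof (cases "Suc i < length es")
      case True then show ?thesis using lv by (simp add: nth_butlast)
    next
      case False
      then have "Suc i = length es" using i by simp
      moreover have "vs \<noteq> []" using lv by auto
      then have "hd vs = vs ! 0" "last vs = vs ! length es" using lv
        by (auto simp: hd_conv_nth last_conv_nth)
      ultimately show ?thesis using cl ne lv by (simp add: nth_butlast)
    qed
    ultimately show "{tsrc H (es ! i), ttgt H (es ! i)} = {butlast vs ! i, butlast vs ! (Suc i mod length es)}"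
      by simp
  qed
qed

lemma not_cactus:
  assumes AB: "A \<inter> B = {}" "A \<subseteq> tedges H" "B \<subseteq> tedges H"
    and endA: "\<forall>e\<in>A. tsrc H e \<in> WA \<and> ttgt H e \<in> WA"
    and endB: "\<forall>e\<in>B. tsrc H e \<in> WB \<and> ttgt H e \<in> WB"
    and conA: "\<forall>u\<in>WA. \<forall>v\<in>WA. (u, v) \<in> (adjX H A)\<^sup>*"
    and conB: "\<forall>u\<in>WB. \<forall>v\<in>WB. (u, v) \<in> (adjX H B)\<^sup>*"
    and tec: "\<forall>f\<in>B. \<forall>u\<in>WB. \<forall>v\<in>WB. (u, v) \<in> (adjX H (B - {f}))\<^sup>*"
    and xy: "x \<in> WA" "x \<in> WB" "y \<in> WA" "y \<in> WB" "x \<noteq> y"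
  shows "\<not> cactus H"
proof
  assume ca: "cactus H"
  obtain vs es where p: "is_path H A vs es" "hd vs = x" "last vs = y" "distinct vs"
    using rtrancl_simple_path conA xy by metis
  define L where "L = length es"
  have lv: "length vs = Suc L" using p L_def by (simp add: is_path_def)
  have "vs \<noteq> []" using lv by auto
  then have vs0: "vs ! 0 = x" using p by (simp add: hd_conv_nth[symmetric])
  have vsL: "vs ! L = y" using p lv \<open>vs \<noteq> []\<close> by (simp add: last_conv_nth)
  have L0: "0 < L" using vs0 vsL xy by (cases L) auto
  define j where "j = (LEAST j. 0 < j \<and> j \<le> L \<and> vs ! j \<in> WB)"
  have exj: "0 < L \<and> L \<le> L \<and> vs ! L \<in> WB" using L0 vsL xy by simp
  have j: "0 < j" "j \<le> L" "vs ! j \<in> WB" using LeastI[of "\<lambda>j. 0 < j \<and> j \<le> L \<and> vs ! j \<in> WB", OF exj] j_def by auto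
  have jmin: "vs ! i \<notin> WB" if "0 < i" "i < j" for i
    using not_less_Least[of i "\<lambda>j. 0 < j \<and> j \<le> L \<and> vs ! j \<in> WB"] that j j_def by auto
  define vs1 where "vs1 = take (Suc j) vs"
  define es1 where "es1 = take j es"
  define q where "q = vs ! j"
  have p1: "is_path H A vs1 es1" using is_path_take[OF p(1)] j L_def vs1_def es1_def by simp
  have lv1: "length vs1 = Suc j" using lv j vs1_def by simp
  have hd1: "hd vs1 = x" using p vs1_def lv by simp
  have last1: "last vs1 = q" using vs1_def q_def j lv by (simp add: take_Suc_conv_app_nth)
  have d1: "distinct vs1" using p vs1_def by simp
  have qx: "q \<noteq> x"
  proof
    assume "q = x"
    then have "vs ! j = vs ! 0" using q_def vs0 by simp
    then have "j = 0" using p(4) j lv by (simp add: nth_eq_iff_index_eq)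
    then show False using j by simp
  qed
  have es1ne: "es1 \<noteq> []" using j L_def es1_def by (cases es) auto
  have vs1_nth: "vs1 ! i = vs ! i" if "i \<le> j" for i using that vs1_def by simp
  obtain vs2 es2 where p2: "is_path H B vs2 es2" "hd vs2 = q" "last vs2 = x" "distinct vs2"
    using rtrancl_simple_path conB xy j q_def by metis
  have lv2: "length vs2 = Suc (length es2)" using p2 by (simp add: is_path_def)
  have es2ne: "es2 \<noteq> []"
  proof
    assume "es2 = []"
    then have "length vs2 = 1" using lv2 by simp
    then have "hd vs2 = last vs2" by (cases vs2) auto
    then show False using p2 qx by simp
  qed
  obtain rest where vs2: "vs2 = q # rest" using p2 lv2 by (cases vs2) auto
  have restne: "rest \<noteq> []" using vs2 lv2 es2ne by auto
  have lastrest: "last rest = x" using p2 vs2 restne by simp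
  have qrest: "q \<notin> set rest" "distinct rest" using p2 vs2 by auto
  have xbr: "x \<notin> set (butlast rest)"
    using qrest(2) restne lastrest by (metis append_butlast_last_id distinct_append disjoint_iff list.set_intros(1))
  have vs2W: "set vs2 \<subseteq> WB" using is_path_verts[OF p2(1) es2ne endB] .
  define pm where "pm = vs1 @ tl vs2"
  define em where "em = es1 @ es2"
  have pmp: "is_path H (A \<union> B) pm em"
    unfolding pm_def em_def by (rule is_path_append[OF p1 p2(1)]) (simp add: last1 p2)
  have "hd pm = x" using hd1 lv1 pm_def by (cases vs1) auto
  moreover have "last pm = x" using pm_def vs2 restne lastrest by simp
  ultimately have cl: "hd pm = last pm" by simp
  have bpm: "butlast pm = vs1 @ butlast rest" using pm_def vs2 restne by (simp add: butlast_append)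
  have dbr: "distinct (butlast rest)" using qrest(2) by (simp add: distinct_butlast)
  have disj: "set vs1 \<inter> set (butlast rest) = {}"
  proof (rule ccontr)
    assume "set vs1 \<inter> set (butlast rest) \<noteq> {}"
    then obtain z where z: "z \<in> set vs1" "z \<in> set (butlast rest)" by blast
    have zW: "z \<in> WB" using z(2) vs2W vs2 by (auto dest: in_set_butlastD)
    have zq: "z \<noteq> q" using z(2) qrest by (auto dest: in_set_butlastD)
    have zx: "z \<noteq> x" using z(2) xbr by auto
    obtain i where i: "i < length vs1" "vs1 ! i = z" using z(1) by (metis in_set_conv_nth)
    have "i \<le> j" using i lv1 by simp
    then have zi: "z = vs ! i" using vs1_nth i by simp
    show False
    proof (cases "i = 0")
      case True then show False using zi vs0 zx by simp
    next
      case False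
      show False
      proof (cases "i = j")
        case True then show False using zi q_def zq by simp
      next
        case False
        then have "0 < i" "i < j" using \<open>i \<noteq> 0\<close> \<open>i \<le> j\<close> by auto
        then show False using jmin zi zW by blast
      qed
    qed
  qed
  have dpm: "distinct (butlast pm)" using bpm d1 dbr disj by simp
  have es1A: "set es1 \<subseteq> A" using is_path_edges[OF p1] .
  have es2B: "set es2 \<subseteq> B" using is_path_edges[OF p2(1)] .
  have dem: "distinct em" unfolding em_def
    using is_path_distinct_edges[OF p1 d1] is_path_distinct_edges[OF p2(1) p2(4)] es1A es2B AB(1)
    by auto
  have ne_em: "em \<noteq> []" using es1ne em_def by simp
  have cm: "simple_cycle H (set em)"
    by (rule closed_path_cycle[OF pmp ne_em cl dpm dem]) (use AB in auto)
  define f where "f = es2 ! 0"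
  have fB: "f \<in> B" using es2B es2ne f_def by auto
  have fem: "f \<in> set em" using es2ne f_def em_def by auto
  have aA: "es1 ! 0 \<in> set em" "es1 ! 0 \<in> A" using es1ne es1A em_def by auto
  define a where "a = tsrc H f"
  define b where "b = ttgt H f"
  have ab: "a \<in> WB" "b \<in> WB" using endB fB a_def b_def by auto
  obtain vs3 es3 where p3: "is_path H (B - {f}) vs3 es3" "hd vs3 = b" "last vs3 = a" "distinct vs3"
    using rtrancl_simple_path tec fB ab by metis
  have lv3: "length vs3 = Suc (length es3)" using p3 by (simp add: is_path_def)
  have p3': "is_path H B vs3 es3" using is_path_mono[OF p3(1)] by blast
  have pc: "is_path H B (vs3 @ [b]) (es3 @ [f])"
    by (rule is_path_snoc[OF p3' fB]) (simp add: p3 a_def b_def)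
  have clc: "hd (vs3 @ [b]) = last (vs3 @ [b])" using p3 lv3 by (cases vs3) auto
  have dc: "distinct (butlast (vs3 @ [b]))" using p3 by simp
  have es3B: "set es3 \<subseteq> B - {f}" using is_path_edges[OF p3(1)] .
  have dec: "distinct (es3 @ [f])" using is_path_distinct_edges[OF p3(1) p3(4)] es3B by auto
  have cb: "simple_cycle H (set (es3 @ [f]))"
    by (rule closed_path_cycle[OF pc _ clc dc dec]) (use AB in auto)
  have cbB: "set (es3 @ [f]) \<subseteq> B" using es3B fB by auto
  have "f \<in> tedges H" using fB AB by auto
  then have "\<exists>!C. simple_cycle H C \<and> f \<in> C" using ca by (simp add: cactus_def)
  then have "set em = set (es3 @ [f])" using cm cb fem by auto
  then show False using aA cbB AB(1) by auto
qed

lemma cyclic_transition: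
  assumes "0 < (n::nat)" "i0 < n" "P i0" "j0 < n" "\<not> P j0"
  shows "\<exists>i<n. P i \<and> \<not> P (Suc i mod n)"
proof (rule ccontr)
  assume "\<not> ?thesis"
  then have st: "\<And>i. i < n \<Longrightarrow> P i \<Longrightarrow> P (Suc i mod n)" by blast
  have "P ((i0 + k) mod n)" for k
  proof (induction k)
    case 0 then show ?case using assms by simp
  next
    case (Suc k)
    have "P (Suc ((i0 + k) mod n) mod n)" using st Suc assms(1) by simp
    then show ?case by (simp add: mod_Suc_eq)
  qed
  from this[of "j0 + n - i0"] have "P ((j0 + n) mod n)" using assms by simp
  then show False using assms by simp
qed

lemma cycle_split:
  assumes sc: "simple_cycle H C" and E: "tedges H \<subseteq> A \<union> B"
    and endA: "\<forall>e\<in>A. tsrc H e \<in> WA \<and> ttgt H e \<in> WA"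
    and endB: "\<forall>e\<in>B. tsrc H e \<in> WB \<and> ttgt H e \<in> WB"
    and W: "WA \<inter> WB \<subseteq> {c}"
  shows "C \<subseteq> A \<or> C \<subseteq> B"
proof (rule ccontr)
  assume nsub: "\<not> (C \<subseteq> A \<or> C \<subseteq> B)"
  obtain es vs where C: "C \<subseteq> tedges H" "es \<noteq> []" "distinct es" "set es = C"
    "length vs = length es" "distinct vs"
    and ends: "\<forall>i<length es. {tsrc H (es ! i), ttgt H (es ! i)} = {vs ! i, vs ! (Suc i mod length es)}"
    using sc unfolding simple_cycle_def by blast
  define n where "n = length es"
  have n0: "0 < n" using C n_def by simp
  obtain a where a: "a \<in> C" "a \<notin> B" using nsub by blast
  obtain b where b: "b \<in> C" "b \<notin> A" using nsub by blast
  have aA: "a \<in> A" and bB: "b \<in> B" using a b C E by auto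
  obtain i0 where i0: "i0 < n" "es ! i0 = a" using a C n_def by (metis in_set_conv_nth)
  obtain j0 where j0: "j0 < n" "es ! j0 = b" using b C n_def by (metis in_set_conv_nth)
  have inAB: "es ! i \<in> A \<or> es ! i \<in> B" if "i < n" for i
  proof -
    have "es ! i \<in> C" using that C n_def by auto
    then show ?thesis using C E by blast
  qed
  have trans_c: "vs ! (Suc i mod n) = c"
    if i: "i < n" and X: "(es ! i \<in> A \<and> es ! (Suc i mod n) \<in> B) \<or> (es ! i \<in> B \<and> es ! (Suc i mod n) \<in> A)" for i
  proof -
    define k where "k = Suc i mod n"
    have k: "k < n" using n0 k_def by simp
    have e1: "vs ! k \<in> {tsrc H (es ! i), ttgt H (es ! i)}" using ends i n_def k_def by auto
    have e2: "vs ! k \<in> {tsrc H (es ! k), ttgt H (es ! k)}" using ends k n_def by auto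
    have X': "(es ! i \<in> A \<and> es ! k \<in> B) \<or> (es ! i \<in> B \<and> es ! k \<in> A)" using X k_def by simp
    have "vs ! k \<in> WA \<and> vs ! k \<in> WB" using X'
    proof (elim disjE conjE)
      assume "es ! i \<in> A" "es ! k \<in> B"
      then show ?thesis using e1 e2 endA endB by auto
    next
      assume "es ! i \<in> B" "es ! k \<in> A"
      then show ?thesis using e1 e2 endA endB by auto
    qed
    then show ?thesis using W k_def by auto
  qed
  obtain i where i: "i < n" "es ! i \<in> A" "es ! (Suc i mod n) \<notin> A"
    using cyclic_transition[of n i0 "\<lambda>i. es ! i \<in> A" j0] n0 i0 j0 aA b by auto
  obtain j where j: "j < n" "es ! j \<notin> A" "es ! (Suc j mod n) \<in> A"
    using cyclic_transition[of n j0 "\<lambda>i. es ! i \<notin> A" i0] n0 i0 j0 aA b by auto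
  have ci: "vs ! (Suc i mod n) = c" using trans_c[OF i(1)] i inAB[of "Suc i mod n"] n0 by simp
  have cj: "vs ! (Suc j mod n) = c" using trans_c[OF j(1)] j inAB[of "Suc j mod n"] inAB[of j] n0 by simp
  have "vs ! (Suc i mod n) = vs ! (Suc j mod n)" using ci cj by simp
  moreover have "Suc i mod n < length vs" "Suc j mod n < length vs" using C n_def n0 by auto
  ultimately have "Suc i mod n = Suc j mod n" using nth_eq_iff_index_eq[OF C(6)] by blast
  then have "rot n i = rot n j" by (simp add: rot_def)
  then have "i = j" using inj_onD[OF inj_rot[of n]] i(1) j(1) by simp
  then show False using i j by simp
qed

lemma sc_restrict:
  assumes "X \<subseteq> tedges H"
  shows "simple_cycle (H\<lparr>tverts := W, tedges := X\<rparr>) C \<longleftrightarrow> simple_cycle H C \<and> C \<subseteq> X"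
  using assms unfolding simple_cycle_def by auto

lemma dl_restrict:
  "directed_listing (H\<lparr>tverts := W, tedges := X\<rparr>) C es \<longleftrightarrow> directed_listing H C es"
  unfolding directed_listing_def by simp

lemma simple_cycle_ne: "simple_cycle H C \<Longrightarrow> C \<noteq> {}"
  unfolding simple_cycle_def by auto

lemma tau0_split:
  fixes H :: "('w, 'f, 'a) tgraph"
  assumes E: "tedges H = A \<union> B" "A \<inter> B = {}" "finite (tedges H)"
    and endA: "\<forall>e\<in>A. tsrc H e \<in> WA \<and> ttgt H e \<in> WA"
    and endB: "\<forall>e\<in>B. tsrc H e \<in> WB \<and> ttgt H e \<in> WB"
    and W: "WA \<inter> WB \<subseteq> {c}"
    and conH: "connected_graph H"
    and conA: "connected_graph (H\<lparr>tverts := WA, tedges := A\<rparr>)"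
    and conB: "connected_graph (H\<lparr>tverts := WB, tedges := B\<rparr>)"
  shows "tau0 \<kappa> H = tau0 \<kappa> (H\<lparr>tverts := WA, tedges := A\<rparr>) * tau0 \<kappa> (H\<lparr>tverts := WB, tedges := B\<rparr>)"
proof -
  define HA where "HA = H\<lparr>tverts := WA, tedges := A\<rparr>"
  define HB where "HB = H\<lparr>tverts := WB, tedges := B\<rparr>"
  have Asub: "A \<subseteq> tedges H" and Bsub: "B \<subseteq> tedges H" using E by auto
  have scA: "simple_cycle HA C \<longleftrightarrow> simple_cycle H C \<and> C \<subseteq> A" for C
    unfolding HA_def by (rule sc_restrict[OF Asub])
  have scB: "simple_cycle HB C \<longleftrightarrow> simple_cycle H C \<and> C \<subseteq> B" for C
    unfolding HB_def by (rule sc_restrict[OF Bsub])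
  have split: "simple_cycle H C \<Longrightarrow> C \<subseteq> A \<or> C \<subseteq> B" for C
    by (rule cycle_split[OF _ _ endA endB W]) (use E in auto)
  have cycA: "(simple_cycle H C \<and> e \<in> C) \<longleftrightarrow> (simple_cycle HA C \<and> e \<in> C)" if "e \<in> A" for e C
    using split[of C] scA that E(2) by blast
  have cycB: "(simple_cycle H C \<and> e \<in> C) \<longleftrightarrow> (simple_cycle HB C \<and> e \<in> C)" if "e \<in> B" for e C
    using split[of C] scB that E(2) by blast
  have pads: "pads H = pads HA \<union> pads HB"
    unfolding pads_def using split scA scB by blast
  have padsd: "pads HA \<inter> pads HB = {}"
  proof (rule ccontr)
    assume "pads HA \<inter> pads HB \<noteq> {}"
    then obtain C where "simple_cycle HA C" "simple_cycle HB C" unfolding pads_def by blast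
    then have "C \<subseteq> A \<inter> B" "C \<noteq> {}" using scA scB simple_cycle_ne by blast+
    then show False using E(2) by blast
  qed
  have cact: "cactus H \<longleftrightarrow> cactus HA \<and> cactus HB"
  proof -
    have "(\<forall>e\<in>tedges H. \<exists>!C. simple_cycle H C \<and> e \<in> C) \<longleftrightarrow>
          (\<forall>e\<in>A. \<exists>!C. simple_cycle HA C \<and> e \<in> C) \<and> (\<forall>e\<in>B. \<exists>!C. simple_cycle HB C \<and> e \<in> C)"
    proof -
      have eA: "(\<exists>!C. simple_cycle H C \<and> e \<in> C) = (\<exists>!C. simple_cycle HA C \<and> e \<in> C)" if "e \<in> A" for e
        by (simp only: cycA[OF that])
      have eB: "(\<exists>!C. simple_cycle H C \<and> e \<in> C) = (\<exists>!C. simple_cycle HB C \<and> e \<in> C)" if "e \<in> B" for e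
        by (simp only: cycB[OF that])
      show ?thesis unfolding E(1) ball_Un using eA eB by simp
    qed
    then show ?thesis using conH conA conB unfolding cactus_def HA_def HB_def by simp
  qed
  have dlA: "directed_listing HA = directed_listing H" unfolding HA_def by (simp add: dl_restrict fun_eq_iff)
  have dlB: "directed_listing HB = directed_listing H" unfolding HB_def by (simp add: dl_restrict fun_eq_iff)
  have labA: "tlab HA = tlab H" and labB: "tlab HB = tlab H" unfolding HA_def HB_def by simp_all
  have oc: "oriented_cactus H \<longleftrightarrow> oriented_cactus HA \<and> oriented_cactus HB"
    unfolding oriented_cactus_def using cact pads dlA dlB by auto
  have fin: "finite (pads HA)" "finite (pads HB)"
    using finite_pads[OF E(3)] pads by auto
  show ?thesis
  proof (cases "oriented_cactus H")
    case True
    then have "oriented_cactus HA" "oriented_cactus HB" using oc by auto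
    moreover have "(\<Prod>C\<in>pads H. \<kappa> (map (tlab H) (SOME es. directed_listing H C es))) =
       (\<Prod>C\<in>pads HA. \<kappa> (map (tlab H) (SOME es. directed_listing H C es))) *
       (\<Prod>C\<in>pads HB. \<kappa> (map (tlab H) (SOME es. directed_listing H C es)))"
      unfolding pads by (rule prod.union_disjoint[OF fin padsd])
    ultimately show ?thesis using True unfolding tau0_def HA_def[symmetric] HB_def[symmetric]
      by (simp add: dlA dlB labA labB)
  next
    case False
    then show ?thesis using oc unfolding tau0_def HA_def[symmetric] HB_def[symmetric] by auto
  qed
qed

lemma block_of_eq:
  assumes "partition_on A P" "B \<in> P" "x \<in> B"
  shows "block_of P x = B"
  unfolding block_of_def
proof (rule the_equality)
  show "B \<in> P \<and> x \<in> B" using assms by simp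
next
  fix B' assume "B' \<in> P \<and> x \<in> B'"
  then show "B' = B" using assms unfolding partition_on_def disjoint_def by blast
qed

lemma block_of_in:
  assumes "partition_on A P" "x \<in> A"
  shows "block_of P x \<in> P" "x \<in> block_of P x"
proof -
  obtain B where "B \<in> P" "x \<in> B" using assms partition_onD1 by blast
  then show "block_of P x \<in> P" "x \<in> block_of P x" using block_of_eq[OF assms(1)] by auto
qed

lemma reach_map:
  assumes "(u, v) \<in> (adj_rel T)\<^sup>*"
    and m: "\<forall>e\<in>tedges T. m e \<in> X \<and> tsrc H (m e) = h (tsrc T e) \<and> ttgt H (m e) = h (ttgt T e)"
  shows "(h u, h v) \<in> (adjX H X)\<^sup>*"
  using assms(1)
proof (induction rule: rtrancl_induct)
  case (step y z)
  then obtain e where e: "e \<in> tedges T" "(tsrc T e = y \<and> ttgt T e = z) \<or> (tsrc T e = z \<and> ttgt T e = y)"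
    unfolding adj_rel_def by auto
  have "(h y, h z) \<in> adjX H X" using m e unfolding adjX_def by force
  then show ?case using step by auto
qed simp

definition pull :: "'x set \<Rightarrow> ('x \<Rightarrow> 'y) \<Rightarrow> 'y set set \<Rightarrow> 'x set set" where
  "pull X h P = (\<lambda>B. X \<inter> h -` B) ` P - {{}}"

lemma partition_pull:
  assumes P: "partition_on A P" and h: "h ` X \<subseteq> A"
  shows "partition_on X (pull X h P)"
  unfolding pull_def
proof (rule partition_onI)
  show "\<Union> ((\<lambda>B. X \<inter> h -` B) ` P - {{}}) = X"
  proof (intro set_eqI iffI)
    fix x assume "x \<in> X"
    then obtain B where "B \<in> P" "h x \<in> B" using h P partition_onD1 by blast
    then show "x \<in> \<Union> ((\<lambda>B. X \<inter> h -` B) ` P - {{}})" using \<open>x \<in> X\<close> by blast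
  qed auto
next
  fix p q assume p: "p \<in> (\<lambda>B. X \<inter> h -` B) ` P - {{}}" and q: "q \<in> (\<lambda>B. X \<inter> h -` B) ` P - {{}}"
    and pq: "p \<noteq> q"
  obtain B1 where B1: "B1 \<in> P" "p = X \<inter> h -` B1" using p by blast
  obtain B2 where B2: "B2 \<in> P" "q = X \<inter> h -` B2" using q by blast
  have "B1 \<noteq> B2" using pq B1 B2 by auto
  then have "B1 \<inter> B2 = {}" using P B1 B2 unfolding partition_on_def disjoint_def by blast
  then show "disjnt p q" using B1 B2 by (auto simp: disjnt_def)
qed auto

lemma block_of_pull:
  assumes P: "partition_on A P" and h: "h ` X \<subseteq> A" and x: "x \<in> X"
  shows "block_of (pull X h P) x = X \<inter> h -` block_of P (h x)"
proof (rule block_of_eq[OF partition_pull[OF P h]])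
  have "block_of P (h x) \<in> P" "h x \<in> block_of P (h x)" using block_of_in[OF P] h x by auto
  then show "X \<inter> h -` block_of P (h x) \<in> pull X h P" "x \<in> X \<inter> h -` block_of P (h x)"
    using x unfolding pull_def by auto
qed

lemma pull_block:
  assumes P: "partition_on A P" and h: "h ` X \<subseteq> A" and B1: "B1 \<in> pull X h P" and u: "u \<in> B1"
  shows "B1 = X \<inter> h -` block_of P (h u)" "u \<in> X"
proof -
  obtain B where B: "B \<in> P" "B1 = X \<inter> h -` B" using B1 unfolding pull_def by blast
  have "block_of P (h u) = B" using block_of_eq[OF P B(1)] u B by auto
  then show "B1 = X \<inter> h -` block_of P (h u)" using B by simp
  show "u \<in> X" using u B by auto
qed

lemma pull_ne: "B1 \<in> pull X h P \<Longrightarrow> \<exists>u. u \<in> B1"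
  unfolding pull_def by auto

lemma quot_iso_generic:
  assumes P: "partition_on A P" and h: "h ` tverts T \<subseteq> A"
    and wf: "\<forall>e\<in>tedges T. tsrc T e \<in> tverts T \<and> ttgt T e \<in> tverts T"
    and m: "inj_on m (tedges T)"
    and ed: "\<forall>e\<in>tedges T. tsrc H (m e) = block_of P (h (tsrc T e)) \<and> ttgt H (m e) = block_of P (h (ttgt T e))
               \<and> tlab H (m e) = tlab T e"
    and vH: "tverts H = block_of P ` h ` tverts T" and eH: "tedges H = m ` tedges T"
  shows "giso (quot_graph T (pull (tverts T) h P)) H (\<lambda>B1. block_of P (h (SOME u. u \<in> B1))) m"
proof -
  let ?V = "tverts T"
  let ?P1 = "pull ?V h P"
  let ?f = "\<lambda>B1. block_of P (h (SOME u. u \<in> B1))"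
  have P1: "partition_on ?V ?P1" by (rule partition_pull[OF P h])
  have fB: "B1 = ?V \<inter> h -` ?f B1" "(SOME u. u \<in> B1) \<in> ?V" if "B1 \<in> ?P1" for B1
  proof -
    have "(SOME u. u \<in> B1) \<in> B1" using pull_ne[OF that] by (meson someI_ex)
    then show "B1 = ?V \<inter> h -` ?f B1" "(SOME u. u \<in> B1) \<in> ?V" using pull_block[OF P h that] by auto
  qed
  have fblock: "?f (block_of ?P1 x) = block_of P (h x)" if x: "x \<in> ?V" for x
  proof -
    have bx: "block_of ?P1 x = ?V \<inter> h -` block_of P (h x)" by (rule block_of_pull[OF P h x])
    have inP1: "block_of ?P1 x \<in> ?P1" by (rule block_of_in(1)[OF P1 x])
    let ?u = "SOME u. u \<in> block_of ?P1 x"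
    have "?u \<in> block_of ?P1 x" using pull_ne[OF inP1] by (meson someI_ex)
    then have "h ?u \<in> block_of P (h x)" using bx by auto
    moreover have "block_of P (h x) \<in> P" using block_of_in(1)[OF P] h x by auto
    ultimately show ?thesis using block_of_eq[OF P] by auto
  qed
  have bij_f: "bij_betw ?f ?P1 (tverts H)"
  proof (rule bij_betwI')
    fix B1 B2 assume "B1 \<in> ?P1" "B2 \<in> ?P1"
    then show "(?f B1 = ?f B2) = (B1 = B2)" using fB by metis
  next
    fix B1 assume "B1 \<in> ?P1"
    then show "?f B1 \<in> tverts H" using fB vH by auto
  next
    fix y assume "y \<in> tverts H"
    then obtain x where x: "x \<in> ?V" "y = block_of P (h x)" using vH by auto
    then show "\<exists>B1\<in>?P1. y = ?f B1" using fblock block_of_in(1)[OF P1 x(1)] by metis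
  qed
  have bij_m: "bij_betw m (tedges T) (tedges H)" using m eH by (simp add: bij_betw_def)
  show ?thesis unfolding giso_def
  proof (intro conjI ballI)
    show "bij_betw ?f (tverts (quot_graph T ?P1)) (tverts H)" using bij_f by (simp add: quot_graph_def)
    show "bij_betw m (tedges (quot_graph T ?P1)) (tedges H)" using bij_m by (simp add: quot_graph_def)
  next
    fix e assume "e \<in> tedges (quot_graph T ?P1)"
    then have e: "e \<in> tedges T" by (simp add: quot_graph_def)
    show "tsrc H (m e) = ?f (tsrc (quot_graph T ?P1) e)" using ed e wf fblock by (simp add: quot_graph_def)
    show "ttgt H (m e) = ?f (ttgt (quot_graph T ?P1) e)" using ed e wf fblock by (simp add: quot_graph_def)
    show "tlab H (m e) = tlab (quot_graph T ?P1) e" using ed e by (simp add: quot_graph_def)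
    show "tsrc (quot_graph T ?P1) e \<in> tverts (quot_graph T ?P1)" using e wf block_of_in(1)[OF P1]
      by (simp add: quot_graph_def)
    show "ttgt (quot_graph T ?P1) e \<in> tverts (quot_graph T ?P1)" using e wf block_of_in(1)[OF P1]
      by (simp add: quot_graph_def)
  qed
qed

definition sepP :: "'v1 \<Rightarrow> ('v1 + 'v2) set set \<Rightarrow> bool" where
  "sepP v1 P \<longleftrightarrow> (\<forall>B\<in>P. Inl v1 \<in> B \<or> B \<subseteq> range Inl \<or> B \<subseteq> range Inr)"

lemma adjX_sub: "X \<subseteq> tedges H \<Longrightarrow> adjX H X \<subseteq> adj_rel H"
  unfolding adjX_def adj_rel_def by auto

lemma adj_rel_restrict: "adj_rel (H\<lparr>tverts := W, tedges := X\<rparr>) = adjX H X"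
  unfolding adjX_def adj_rel_def by simp

context
  fixes T1 :: "('v1, 'e1, 'a::ring_1) tgraph" and T2 :: "('v2, 'e2, 'a) tgraph" and v1 :: 'v1 and v2 :: 'v2
  assumes t1: "test_graph T1" and t2: "test_graph T2" and tec2: "two_edge_connected T2"
    and v1: "v1 \<in> tverts T1" and v2: "v2 \<in> tverts T2"
begin

lemma wf1: "\<forall>e\<in>tedges T1. tsrc T1 e \<in> tverts T1 \<and> ttgt T1 e \<in> tverts T1"
  using t1 by (simp add: test_graph_def wf_graph_def)

lemma wf2: "\<forall>e\<in>tedges T2. tsrc T2 e \<in> tverts T2 \<and> ttgt T2 e \<in> tverts T2"
  using t2 by (simp add: test_graph_def wf_graph_def)

lemma G_verts: "tverts (glue T1 v1 T2 v2) = Inl ` tverts T1 \<union> glue_vertex v1 v2 ` tverts T2"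
proof -
  have "glue_vertex v1 v2 ` tverts T2 = insert (Inl v1) (Inr ` (tverts T2 - {v2}))"
    using v2 by (auto simp: glue_vertex_def image_iff)
  then show ?thesis using v1 by (auto simp: glue_def)
qed

lemma g2_in: "w \<in> tverts T2 \<Longrightarrow> glue_vertex v1 v2 w \<in> tverts (glue T1 v1 T2 v2)"
  using G_verts by auto

lemma Inl_in: "u \<in> tverts T1 \<Longrightarrow> Inl u \<in> tverts (glue T1 v1 T2 v2)"
  using G_verts by auto

lemma g2_v2: "glue_vertex v1 v2 v2 = Inl v1"
  by (simp add: glue_vertex_def)

lemma g2_other: "w \<noteq> v2 \<Longrightarrow> glue_vertex v1 v2 w = Inr w"
  by (simp add: glue_vertex_def)

lemma quot_simps:
  shows "tverts (quot_graph (glue T1 v1 T2 v2) P) = P"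
    and "tedges (quot_graph (glue T1 v1 T2 v2) P) = Inl ` tedges T1 \<union> Inr ` tedges T2"
    and "tsrc (quot_graph (glue T1 v1 T2 v2) P) (Inl e) = block_of P (Inl (tsrc T1 e))"
    and "ttgt (quot_graph (glue T1 v1 T2 v2) P) (Inl e) = block_of P (Inl (ttgt T1 e))"
    and "tsrc (quot_graph (glue T1 v1 T2 v2) P) (Inr e') = block_of P (glue_vertex v1 v2 (tsrc T2 e'))"
    and "ttgt (quot_graph (glue T1 v1 T2 v2) P) (Inr e') = block_of P (glue_vertex v1 v2 (ttgt T2 e'))"
    and "tlab (quot_graph (glue T1 v1 T2 v2) P) (Inl e) = tlab T1 e"
    and "tlab (quot_graph (glue T1 v1 T2 v2) P) (Inr e') = tlab T2 e'"
  by (simp_all add: quot_graph_def glue_def)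

context
  fixes P assumes P: "partition_on (tverts (glue T1 v1 T2 v2)) P"
begin

abbreviation "HH \<equiv> quot_graph (glue T1 v1 T2 v2) P"
abbreviation "AA \<equiv> Inl ` tedges T1 :: ('e1 + 'e2) set"
abbreviation "BB \<equiv> Inr ` tedges T2 :: ('e1 + 'e2) set"
abbreviation "WA \<equiv> block_of P ` Inl ` tverts T1"
abbreviation "WB \<equiv> block_of P ` glue_vertex v1 v2 ` tverts T2"
abbreviation "cc \<equiv> block_of P (Inl v1)"

lemma endA: "\<forall>e\<in>AA. tsrc HH e \<in> WA \<and> ttgt HH e \<in> WA"
  using wf1 by (auto simp: quot_simps)

lemma endB: "\<forall>e\<in>BB. tsrc HH e \<in> WB \<and> ttgt HH e \<in> WB"
  using wf2 by (auto simp: quot_simps)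

lemma conA: "\<forall>u\<in>WA. \<forall>v\<in>WA. (u, v) \<in> (adjX HH AA)\<^sup>*"
proof (intro ballI)
  fix u v assume "u \<in> WA" "v \<in> WA"
  then obtain u' v' where uv: "u' \<in> tverts T1" "v' \<in> tverts T1" "u = block_of P (Inl u')" "v = block_of P (Inl v')"
    by auto
  have "(u', v') \<in> (adj_rel T1)\<^sup>*" using t1 uv by (auto simp: test_graph_def connected_graph_def)
  from reach_map[OF this, of Inl AA HH "\<lambda>x. block_of P (Inl x)"]
  show "(u, v) \<in> (adjX HH AA)\<^sup>*" using uv by (simp add: quot_simps)
qed

lemma conB: "\<forall>u\<in>WB. \<forall>v\<in>WB. (u, v) \<in> (adjX HH BB)\<^sup>*"
proof (intro ballI)
  fix u v assume "u \<in> WB" "v \<in> WB"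
  then obtain u' v' where uv: "u' \<in> tverts T2" "v' \<in> tverts T2"
    "u = block_of P (glue_vertex v1 v2 u')" "v = block_of P (glue_vertex v1 v2 v')"
    by auto
  have "(u', v') \<in> (adj_rel T2)\<^sup>*" using t2 uv by (auto simp: test_graph_def connected_graph_def)
  from reach_map[OF this, of Inr BB HH "\<lambda>x. block_of P (glue_vertex v1 v2 x)"]
  show "(u, v) \<in> (adjX HH BB)\<^sup>*" using uv by (simp add: quot_simps)
qed

lemma tecB: "\<forall>f\<in>BB. \<forall>u\<in>WB. \<forall>v\<in>WB. (u, v) \<in> (adjX HH (BB - {f}))\<^sup>*"
proof (intro ballI)
  fix f u v assume "f \<in> BB" "u \<in> WB" "v \<in> WB"
  then obtain f' where f: "f' \<in> tedges T2" "f = Inr f'" by auto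
  obtain u' v' where uv: "u' \<in> tverts T2" "v' \<in> tverts T2"
    "u = block_of P (glue_vertex v1 v2 u')" "v = block_of P (glue_vertex v1 v2 v')"
    using \<open>u \<in> WB\<close> \<open>v \<in> WB\<close> by auto
  have "connected_graph (delete_edge T2 f')" using tec2 f by (simp add: two_edge_connected_def)
  moreover have "tverts (delete_edge T2 f') = tverts T2" by (simp add: delete_edge_def)
  ultimately have "(u', v') \<in> (adj_rel (delete_edge T2 f'))\<^sup>*" using uv by (auto simp: connected_graph_def)
  from reach_map[OF this, of Inr "BB - {f}" HH "\<lambda>x. block_of P (glue_vertex v1 v2 x)"]
  show "(u, v) \<in> (adjX HH (BB - {f}))\<^sup>*" using uv f by (simp add: quot_simps delete_edge_def)
qed

lemma cc_A: "cc \<in> WA" using v1 by auto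
lemma cc_B: "cc \<in> WB" using v2 g2_v2 by (metis image_eqI)

lemma tau0_nonsep:
  assumes ns: "\<not> sepP v1 P"
  shows "tau0 \<kappa> HH = 0"
proof -
  obtain B where B: "B \<in> P" "Inl v1 \<notin> B" "\<not> B \<subseteq> range Inl" "\<not> B \<subseteq> range Inr"
    using ns unfolding sepP_def by blast
  obtain z1 where z1: "z1 \<in> B" "z1 \<notin> range Inr" using B by blast
  obtain z2 where z2: "z2 \<in> B" "z2 \<notin> range Inl" using B by blast
  obtain u where u: "z1 = Inl u" using z1 by (cases z1) auto
  obtain w where w: "z2 = Inr w" using z2 by (cases z2) auto
  have BV: "B \<subseteq> tverts (glue T1 v1 T2 v2)" using P B partition_onD1 by blast
  have uV: "u \<in> tverts T1" using BV z1 u by (auto simp: glue_def)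
  have wV: "w \<in> tverts T2" "w \<noteq> v2" using BV z2 w by (auto simp: glue_def)
  have xA: "B \<in> WA" using block_of_eq[OF P B(1)] z1 u uV by force
  have "glue_vertex v1 v2 w = Inr w" using wV g2_other by simp
  then have xB: "B \<in> WB" using block_of_eq[OF P B(1)] z2 w wV by (metis image_eqI)
  have "Inl v1 \<in> cc" using block_of_in(2)[OF P Inl_in[OF v1]] .
  then have xc: "B \<noteq> cc" using B by auto
  have "\<not> cactus HH"
    by (rule not_cactus[OF _ _ _ endA endB conA conB tecB xA xB cc_A cc_B xc]) (auto simp: quot_simps)
  then show ?thesis by (simp add: tau0_def oriented_cactus_def)
qed

lemma P_cover: "tverts HH = WA \<union> WB"
proof -
  have "B \<in> WA \<union> WB" if "B \<in> P" for B
  proof -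
    have "B \<noteq> {}" using partition_onD3[OF P] that by auto
    then obtain z where z: "z \<in> B" by blast
    have "z \<in> tverts (glue T1 v1 T2 v2)" using P that z partition_onD1 by blast
    then have "z \<in> Inl ` tverts T1 \<or> z \<in> glue_vertex v1 v2 ` tverts T2" using G_verts by auto
    moreover have "block_of P z = B" using block_of_eq[OF P that z] .
    ultimately show ?thesis by auto
  qed
  moreover have "WA \<union> WB \<subseteq> P" using block_of_in(1)[OF P] Inl_in g2_in by auto
  ultimately show ?thesis by (auto simp: quot_simps)
qed

context
  assumes sp: "sepP v1 P"
begin

lemma W_inter: "WA \<inter> WB \<subseteq> {cc}"
proof
  fix X assume "X \<in> WA \<inter> WB"
  then obtain u w where u: "u \<in> tverts T1" "X = block_of P (Inl u)"
    and w: "w \<in> tverts T2" "X = block_of P (glue_vertex v1 v2 w)" by auto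
  have XP: "X \<in> P" "Inl u \<in> X" using block_of_in[OF P Inl_in[OF u(1)]] u by auto
  have Xw: "glue_vertex v1 v2 w \<in> X" using block_of_in[OF P g2_in[OF w(1)]] w by auto
  have "Inl v1 \<in> X"
  proof (cases "w = v2")
    case True then show ?thesis using Xw g2_v2 by simp
  next
    case False
    then have "Inr w \<in> X" using Xw g2_other by simp
    then show ?thesis using sp XP unfolding sepP_def by blast
  qed
  then have "X = cc" using block_of_eq[OF P XP(1)] by simp
  then show "X \<in> {cc}" by simp
qed

lemma conH: "connected_graph HH"
  unfolding connected_graph_def
proof (intro conjI ballI)
  show "tverts HH \<noteq> {}" using P_cover cc_A by auto
next
  fix u v assume uv: "u \<in> tverts HH" "v \<in> tverts HH"
  have r: "(x, y) \<in> (adj_rel HH)\<^sup>*" if "x \<in> WA \<union> WB" "y \<in> WA \<union> WB" "x = cc \<or> y = cc" for x y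
  proof -
    have sA: "(adjX HH AA)\<^sup>* \<subseteq> (adj_rel HH)\<^sup>*" by (rule rtrancl_mono, rule adjX_sub) (auto simp: quot_simps)
    have sB: "(adjX HH BB)\<^sup>* \<subseteq> (adj_rel HH)\<^sup>*" by (rule rtrancl_mono, rule adjX_sub) (auto simp: quot_simps)
    have "(x \<in> WA \<and> y \<in> WA) \<or> (x \<in> WB \<and> y \<in> WB)"
      using that(3)
    proof (elim disjE)
      assume "x = cc"
      then show ?thesis using that(2) cc_A cc_B by (metis Un_iff)
    next
      assume "y = cc"
      then show ?thesis using that(1) cc_A cc_B by (metis Un_iff)
    qed
    then show ?thesis
    proof
      assume xy: "x \<in> WA \<and> y \<in> WA"
      then have "(x, y) \<in> (adjX HH AA)\<^sup>*" using bspec[OF bspec[OF conA] ] by blast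
      then show ?thesis using sA by blast
    next
      assume xy: "x \<in> WB \<and> y \<in> WB"
      then have "(x, y) \<in> (adjX HH BB)\<^sup>*" using bspec[OF bspec[OF conB] ] by blast
      then show ?thesis using sB by blast
    qed
  qed
  have "(u, cc) \<in> (adj_rel HH)\<^sup>*" "(cc, v) \<in> (adj_rel HH)\<^sup>*"
    using r uv P_cover cc_A by auto
  then show "(u, v) \<in> (adj_rel HH)\<^sup>*" by simp
qed

lemma conHA: "connected_graph (HH\<lparr>tverts := WA, tedges := AA\<rparr>)"
  unfolding connected_graph_def adj_rel_restrict using conA cc_A by auto

lemma conHB: "connected_graph (HH\<lparr>tverts := WB, tedges := BB\<rparr>)"
  unfolding connected_graph_def adj_rel_restrict using conB cc_B by auto

lemma isoA: "giso (quot_graph T1 (pull (tverts T1) Inl P)) (HH\<lparr>tverts := WA, tedges := AA\<rparr>)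
   (\<lambda>B1. block_of P (Inl (SOME u. u \<in> B1))) Inl"
  by (rule quot_iso_generic[OF P]) (use wf1 Inl_in in \<open>auto simp: quot_simps\<close>)

lemma isoB: "giso (quot_graph T2 (pull (tverts T2) (glue_vertex v1 v2) P)) (HH\<lparr>tverts := WB, tedges := BB\<rparr>)
   (\<lambda>B1. block_of P (glue_vertex v1 v2 (SOME u. u \<in> B1))) Inr"
  by (rule quot_iso_generic[OF P]) (use wf2 g2_in in \<open>auto simp: quot_simps\<close>)

lemma tau0_sep:
  fixes sc :: "complex \<Rightarrow> 'a::ring_1 \<Rightarrow> 'a"
  assumes tr: "unital_tracial_functional sc \<phi>" and fc: "free_cumulants \<phi> \<kappa>"
  shows "tau0 \<kappa> HH = tau0 \<kappa> (quot_graph T1 (pull (tverts T1) Inl P)) *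
                      tau0 \<kappa> (quot_graph T2 (pull (tverts T2) (glue_vertex v1 v2) P))"
proof -
  have fin: "finite (tedges HH)" using t1 t2 by (simp add: quot_simps test_graph_def wf_graph_def)
  have "tau0 \<kappa> HH = tau0 \<kappa> (HH\<lparr>tverts := WA, tedges := AA\<rparr>) * tau0 \<kappa> (HH\<lparr>tverts := WB, tedges := BB\<rparr>)"
    by (rule tau0_split[OF _ _ fin endA endB W_inter conH conHA conHB]) (auto simp: quot_simps)
  also have "\<dots> = tau0 \<kappa> (quot_graph T1 (pull (tverts T1) Inl P)) *
                      tau0 \<kappa> (quot_graph T2 (pull (tverts T2) (glue_vertex v1 v2) P))"
    using tau0_iso[OF tr fc isoA] tau0_iso[OF tr fc isoB] by simp
  finally show ?thesis .
qed

end
end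
end

definition joinP :: "'v1 \<Rightarrow> 'v2 \<Rightarrow> 'v1 set set \<Rightarrow> 'v2 set set \<Rightarrow> ('v1 + 'v2) set set" where
  "joinP v1 v2 P1 P2 = {Inl ` B1 | B1. B1 \<in> P1 \<and> v1 \<notin> B1} \<union> {Inr ` B2 | B2. B2 \<in> P2 \<and> v2 \<notin> B2} \<union>
     {Inl ` block_of P1 v1 \<union> Inr ` (block_of P2 v2 - {v2})}"

lemma part_disj: "partition_on A P \<Longrightarrow> B \<in> P \<Longrightarrow> B' \<in> P \<Longrightarrow> B \<noteq> B' \<Longrightarrow> B \<inter> B' = {}"
  unfolding partition_on_def disjoint_def by blast

lemma part_sub: "partition_on A P \<Longrightarrow> B \<in> P \<Longrightarrow> B \<subseteq> A"
  unfolding partition_on_def by blast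

lemma part_ne: "partition_on A P \<Longrightarrow> B \<in> P \<Longrightarrow> B \<noteq> {}"
  unfolding partition_on_def by blast

context
  fixes V1 :: "'v1 set" and V2 :: "'v2 set" and v1 v2
  assumes v1: "v1 \<in> V1" and v2: "v2 \<in> V2"
begin

abbreviation "VG \<equiv> Inl ` V1 \<union> Inr ` (V2 - {v2}) :: ('v1 + 'v2) set"
abbreviation "g2 \<equiv> glue_vertex v1 v2"

lemma join_partition:
  assumes P1: "partition_on V1 P1" and P2: "partition_on V2 P2"
  shows "partition_on VG (joinP v1 v2 P1 P2)" "sepP v1 (joinP v1 v2 P1 P2)"
proof -
  define C1 where "C1 = block_of P1 v1"
  define C2 where "C2 = block_of P2 v2"
  have C1: "C1 \<in> P1" "v1 \<in> C1" using block_of_in[OF P1 v1] C1_def by auto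
  have C2: "C2 \<in> P2" "v2 \<in> C2" using block_of_in[OF P2 v2] C2_def by auto
  have C1s: "C1 \<subseteq> V1" using part_sub[OF P1 C1(1)] .
  have C2s: "C2 \<subseteq> V2" using part_sub[OF P2 C2(1)] .
  let ?cen = "Inl ` C1 \<union> Inr ` (C2 - {v2})"
  have J: "joinP v1 v2 P1 P2 = {Inl ` B1 | B1. B1 \<in> P1 \<and> v1 \<notin> B1} \<union> {Inr ` B2 | B2. B2 \<in> P2 \<and> v2 \<notin> B2} \<union> {?cen}"
    unfolding joinP_def C1_def C2_def by simp
  show "partition_on VG (joinP v1 v2 P1 P2)"
    unfolding J
  proof (rule partition_onI)
    show "\<Union> ({Inl ` B1 | B1. B1 \<in> P1 \<and> v1 \<notin> B1} \<union> {Inr ` B2 | B2. B2 \<in> P2 \<and> v2 \<notin> B2} \<union> {?cen}) = VG"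
    proof (intro set_eqI iffI)
      fix z assume "z \<in> \<Union> ({Inl ` B1 | B1. B1 \<in> P1 \<and> v1 \<notin> B1} \<union> {Inr ` B2 | B2. B2 \<in> P2 \<and> v2 \<notin> B2} \<union> {?cen})"
      then show "z \<in> VG" using part_sub[OF P1] part_sub[OF P2] C1s C2s by blast
    next
      fix z assume z: "z \<in> VG"
      show "z \<in> \<Union> ({Inl ` B1 | B1. B1 \<in> P1 \<and> v1 \<notin> B1} \<union> {Inr ` B2 | B2. B2 \<in> P2 \<and> v2 \<notin> B2} \<union> {?cen})"
      proof (cases z)
        case (Inl u)
        then have u: "u \<in> V1" using z by auto
        show ?thesis
        proof (cases "v1 \<in> block_of P1 u")
          case True
          then have "block_of P1 u = C1" using block_of_eq[OF P1 block_of_in(1)[OF P1 u] True] C1_def by simp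
          then have "z \<in> ?cen" using block_of_in(2)[OF P1 u] Inl by auto
          then show ?thesis by (rule UnionI[rotated]) simp
        next
          case False
          then have zz: "z \<in> Inl ` block_of P1 u" "block_of P1 u \<in> P1" using block_of_in[OF P1 u] Inl by auto
          have "Inl ` block_of P1 u \<in> {Inl ` B1 | B1. B1 \<in> P1 \<and> v1 \<notin> B1}" using zz False by blast
          then show ?thesis using zz(1) by (intro UnionI[of "Inl ` block_of P1 u"]) auto
        qed
      next
        case (Inr w)
        then have w: "w \<in> V2" "w \<noteq> v2" using z by auto
        show ?thesis
        proof (cases "v2 \<in> block_of P2 w")
          case True
          then have "block_of P2 w = C2" using block_of_eq[OF P2 block_of_in(1)[OF P2 w(1)] True] C2_def by simp
          then have "z \<in> ?cen" using block_of_in(2)[OF P2 w(1)] Inr w by auto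
          then show ?thesis by (rule UnionI[rotated]) simp
        next
          case False
          then have zz: "z \<in> Inr ` block_of P2 w" "block_of P2 w \<in> P2" using block_of_in[OF P2 w(1)] Inr by auto
          have "Inr ` block_of P2 w \<in> {Inr ` B2 | B2. B2 \<in> P2 \<and> v2 \<notin> B2}" using zz False by blast
          then show ?thesis using zz(1) by (intro UnionI[of "Inr ` block_of P2 w"]) auto
        qed
      qed
    qed
  next
    fix p q
    assume p: "p \<in> {Inl ` B1 | B1. B1 \<in> P1 \<and> v1 \<notin> B1} \<union> {Inr ` B2 | B2. B2 \<in> P2 \<and> v2 \<notin> B2} \<union> {?cen}"
      and q: "q \<in> {Inl ` B1 | B1. B1 \<in> P1 \<and> v1 \<notin> B1} \<union> {Inr ` B2 | B2. B2 \<in> P2 \<and> v2 \<notin> B2} \<union> {?cen}"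
      and pq: "p \<noteq> q"
    define blk where "blk z = (case z of Inl u \<Rightarrow> (if v1 \<in> block_of P1 u then ?cen else Inl ` block_of P1 u)
                                 | Inr w \<Rightarrow> (if v2 \<in> block_of P2 w then ?cen else Inr ` block_of P2 w))" for z
    have key: "X = blk z"
      if X: "X \<in> {Inl ` B1 | B1. B1 \<in> P1 \<and> v1 \<notin> B1} \<union> {Inr ` B2 | B2. B2 \<in> P2 \<and> v2 \<notin> B2} \<union> {?cen}"
        and z: "z \<in> X" for X z
    proof -
      consider (a) B1 where "X = Inl ` B1" "B1 \<in> P1" "v1 \<notin> B1" | (b) B2 where "X = Inr ` B2" "B2 \<in> P2" "v2 \<notin> B2"
        | (c) "X = ?cen" using X by blast
      then show ?thesis
      proof cases
        case a
        then obtain u where u: "z = Inl u" "u \<in> B1" using z by auto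
        then have "block_of P1 u = B1" using block_of_eq[OF P1 a(2)] by simp
        then show ?thesis using a u by (simp add: blk_def)
      next
        case b
        then obtain w where w: "z = Inr w" "w \<in> B2" using z by auto
        then have "block_of P2 w = B2" using block_of_eq[OF P2 b(2)] by simp
        then show ?thesis using b w by (simp add: blk_def)
      next
        case c
        show ?thesis
        proof (cases z)
          case (Inl u)
          then have "u \<in> C1" using z c by auto
          then have "block_of P1 u = C1" using block_of_eq[OF P1 C1(1)] by simp
          then show ?thesis using c Inl C1 by (simp add: blk_def)
        next
          case (Inr w)
          then have "w \<in> C2" using z c by auto
          then have "block_of P2 w = C2" using block_of_eq[OF P2 C2(1)] by simp
          then show ?thesis using c Inr C2 by (simp add: blk_def)
        qed
      qed
    qed
    show "disjnt p q"
      unfolding disjnt_def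
    proof (rule ccontr)
      assume "p \<inter> q \<noteq> {}"
      then obtain z where z: "z \<in> p" "z \<in> q" by blast
      have "p = blk z" by (rule key[OF p z(1)])
      moreover have "q = blk z" by (rule key[OF q z(2)])
      ultimately show False using pq by simp
    qed
  next
    show "{} \<notin> {Inl ` B1 | B1. B1 \<in> P1 \<and> v1 \<notin> B1} \<union> {Inr ` B2 | B2. B2 \<in> P2 \<and> v2 \<notin> B2} \<union> {?cen}"
      using part_ne[OF P1] part_ne[OF P2] C1 by auto
  qed
  show "sepP v1 (joinP v1 v2 P1 P2)"
    unfolding J sepP_def using C1 by auto
qed

lemma pull_join:
  assumes P1: "partition_on V1 P1" and P2: "partition_on V2 P2"
  shows "pull V1 Inl (joinP v1 v2 P1 P2) = P1" "pull V2 g2 (joinP v1 v2 P1 P2) = P2"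
proof -
  define C1 where "C1 = block_of P1 v1"
  define C2 where "C2 = block_of P2 v2"
  have C1: "C1 \<in> P1" "v1 \<in> C1" using block_of_in[OF P1 v1] C1_def by auto
  have C2: "C2 \<in> P2" "v2 \<in> C2" using block_of_in[OF P2 v2] C2_def by auto
  have C1s: "C1 \<subseteq> V1" using part_sub[OF P1 C1(1)] .
  have C2s: "C2 \<subseteq> V2" using part_sub[OF P2 C2(1)] .
  let ?cen = "Inl ` C1 \<union> Inr ` (C2 - {v2})"
  have J: "joinP v1 v2 P1 P2 = {Inl ` B1 | B1. B1 \<in> P1 \<and> v1 \<notin> B1} \<union> {Inr ` B2 | B2. B2 \<in> P2 \<and> v2 \<notin> B2} \<union> {?cen}"
    unfolding joinP_def C1_def C2_def by simp
  have onlyC1: "B1 = C1" if "B1 \<in> P1" "v1 \<in> B1" for B1 using block_of_eq[OF P1 that] C1_def by simp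
  have onlyC2: "B2 = C2" if "B2 \<in> P2" "v2 \<in> B2" for B2 using block_of_eq[OF P2 that] C2_def by simp
  have i1: "V1 \<inter> Inl -` (Inl ` B1) = B1" if "B1 \<in> P1" for B1 using part_sub[OF P1 that] by auto
  have i2: "V1 \<inter> Inl -` (Inr ` B2) = {}" for B2 :: "'v2 set" by auto
  have i3: "V1 \<inter> Inl -` ?cen = C1" using C1s by auto
  show "pull V1 Inl (joinP v1 v2 P1 P2) = P1"
  proof (intro set_eqI iffI)
    fix X assume "X \<in> pull V1 Inl (joinP v1 v2 P1 P2)"
    then obtain B where B: "B \<in> joinP v1 v2 P1 P2" "X = V1 \<inter> Inl -` B" "X \<noteq> {}" unfolding pull_def by auto
    consider (a) B1 where "B = Inl ` B1" "B1 \<in> P1" | (b) B2 where "B = Inr ` B2" | (c) "B = ?cen"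
      using B(1) unfolding J by blast
    then show "X \<in> P1"
    proof cases
      case a
      then have "X = B1" using B(2) i1[OF a(2)] by simp
      then show ?thesis using a by simp
    next
      case b then show ?thesis using B i2 by simp
    next
      case c then show ?thesis using B i3 C1 by simp
    qed
  next
    fix X assume X: "X \<in> P1"
    show "X \<in> pull V1 Inl (joinP v1 v2 P1 P2)"
    proof (cases "v1 \<in> X")
      case True
      then have "X = C1" using onlyC1 X by simp
      then show ?thesis unfolding pull_def J using i3 C1 by auto
    next
      case False
      then have "Inl ` X \<in> joinP v1 v2 P1 P2" "X \<noteq> {}" unfolding J using X part_ne[OF P1] by auto
      then show ?thesis unfolding pull_def using i1[OF X] by (metis (no_types, lifting) Diff_iff image_eqI singletonD)
    qed
  qed
  have k1: "V2 \<inter> g2 -` (Inl ` B1) = {}" if "B1 \<in> P1" "v1 \<notin> B1" for B1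
    using that by (auto simp: glue_vertex_def split: if_splits)
  have k2: "V2 \<inter> g2 -` (Inr ` B2) = B2" if "B2 \<in> P2" "v2 \<notin> B2" for B2
    using that part_sub[OF P2 that(1)] by (auto simp: glue_vertex_def split: if_splits)
  have k3: "V2 \<inter> g2 -` ?cen = C2" using C2s C2 C1 v2 by (auto simp: glue_vertex_def split: if_splits)
  show "pull V2 g2 (joinP v1 v2 P1 P2) = P2"
  proof (intro set_eqI iffI)
    fix X assume "X \<in> pull V2 g2 (joinP v1 v2 P1 P2)"
    then obtain B where B: "B \<in> joinP v1 v2 P1 P2" "X = V2 \<inter> g2 -` B" "X \<noteq> {}" unfolding pull_def by auto
    consider (a) B1 where "B = Inl ` B1" "B1 \<in> P1" "v1 \<notin> B1" | (b) B2 where "B = Inr ` B2" "B2 \<in> P2" "v2 \<notin> B2"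
      | (c) "B = ?cen"
      using B(1) unfolding J by blast
    then show "X \<in> P2"
    proof cases
      case a then show ?thesis using B k1[OF a(2,3)] a by simp
    next
      case b then show ?thesis using B k2[OF b(2,3)] b by simp
    next
      case c then show ?thesis using B k3 C2 by simp
    qed
  next
    fix X assume X: "X \<in> P2"
    show "X \<in> pull V2 g2 (joinP v1 v2 P1 P2)"
    proof (cases "v2 \<in> X")
      case True
      then have "X = C2" using onlyC2 X by simp
      then show ?thesis unfolding pull_def J using k3 C2 by auto
    next
      case False
      then have "Inr ` X \<in> joinP v1 v2 P1 P2" "X \<noteq> {}" unfolding J using X part_ne[OF P2] by auto
      then show ?thesis unfolding pull_def using k2[OF X False] by (metis (no_types, lifting) Diff_iff image_eqI singletonD)
    qed
  qed
qed

lemma join_pull: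
  assumes P: "partition_on VG P" and sp: "sepP v1 P"
  shows "joinP v1 v2 (pull V1 Inl P) (pull V2 g2 P) = P"
proof -
  define c where "c = block_of P (Inl v1)"
  have h1: "Inl ` V1 \<subseteq> VG" by auto
  have h2: "g2 ` V2 \<subseteq> VG" using v1 by (auto simp: glue_vertex_def)
  have c: "c \<in> P" "Inl v1 \<in> c" using block_of_in[OF P] v1 c_def by auto
  have C1: "block_of (pull V1 Inl P) v1 = V1 \<inter> Inl -` c" using block_of_pull[OF P h1 v1] c_def by simp
  have C2: "block_of (pull V2 g2 P) v2 = V2 \<inter> g2 -` c" using block_of_pull[OF P h2 v2] c_def
    by (simp add: glue_vertex_def)
  have cen: "Inl ` (V1 \<inter> Inl -` c) \<union> Inr ` (V2 \<inter> g2 -` c - {v2}) = c"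
  proof (intro set_eqI iffI)
    fix z assume "z \<in> c"
    then have "z \<in> VG" using part_sub[OF P c(1)] by auto
    then show "z \<in> Inl ` (V1 \<inter> Inl -` c) \<union> Inr ` (V2 \<inter> g2 -` c - {v2})"
      using \<open>z \<in> c\<close> by (auto simp: glue_vertex_def)
  qed (auto simp: glue_vertex_def split: if_splits)
  have onlyc: "B = c" if "B \<in> P" "Inl v1 \<in> B" for B using block_of_eq[OF P that] c_def by simp
  show ?thesis
  proof (intro set_eqI iffI)
    fix X assume "X \<in> joinP v1 v2 (pull V1 Inl P) (pull V2 g2 P)"
    then consider (a) B1 where "B1 \<in> pull V1 Inl P" "v1 \<notin> B1" "X = Inl ` B1"
      | (b) B2 where "B2 \<in> pull V2 g2 P" "v2 \<notin> B2" "X = Inr ` B2"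
      | (c) "X = Inl ` (V1 \<inter> Inl -` c) \<union> Inr ` (V2 \<inter> g2 -` c - {v2})"
      unfolding joinP_def C1 C2 by blast
    then show "X \<in> P"
    proof cases
      case a
      then obtain B where B: "B \<in> P" "B1 = V1 \<inter> Inl -` B" "B1 \<noteq> {}" unfolding pull_def by auto
      have "Inl v1 \<notin> B" using a B v1 by auto
      moreover have "\<not> B \<subseteq> range Inr" using B by auto
      ultimately have "B \<subseteq> range Inl" using sp B unfolding sepP_def by blast
      then have "Inl ` B1 = B" using B part_sub[OF P B(1)] by auto
      then show ?thesis using a B by simp
    next
      case b
      then obtain B where B: "B \<in> P" "B2 = V2 \<inter> g2 -` B" "B2 \<noteq> {}" unfolding pull_def by auto
      have "Inl v1 \<notin> B" using b B v2 by (auto simp: glue_vertex_def)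
      moreover have "\<not> B \<subseteq> range Inl"
      proof
        assume "B \<subseteq> range Inl"
        obtain w where "w \<in> B2" using B by auto
        then have "w \<in> V2" "g2 w \<in> B" "w \<noteq> v2" using B b by auto
        then show False using \<open>B \<subseteq> range Inl\<close> by (auto simp: glue_vertex_def)
      qed
      ultimately have "B \<subseteq> range Inr" using sp B unfolding sepP_def by blast
      have "Inr ` B2 = B"
      proof (intro set_eqI iffI)
        fix z :: "'v1 + 'v2" assume "z \<in> Inr ` B2"
        then obtain w where "z = Inr w" "w \<in> V2" "g2 w \<in> B" "w \<noteq> v2" using B b by auto
        then show "z \<in> B" by (simp add: glue_vertex_def)
      next
        fix z assume z: "z \<in> B"
        then obtain w where w: "z = Inr w" using \<open>B \<subseteq> range Inr\<close> by auto
        have "z \<in> VG" using z part_sub[OF P B(1)] by auto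
        then have "w \<in> V2" "w \<noteq> v2" using w by auto
        then show "z \<in> Inr ` B2" using B z w by (auto simp: glue_vertex_def)
      qed
      then show ?thesis using b B by simp
    next
      case c
      then show ?thesis using cen \<open>c \<in> P\<close> by simp
    qed
  next
    fix X assume X: "X \<in> P"
    have Xs: "X \<subseteq> VG" using part_sub[OF P X] .
    have Xne: "X \<noteq> {}" using part_ne[OF P X] .
    consider (a) "Inl v1 \<in> X" | (b) "Inl v1 \<notin> X" "X \<subseteq> range Inl" | (c) "Inl v1 \<notin> X" "X \<subseteq> range Inr"
      using sp X unfolding sepP_def by blast
    then show "X \<in> joinP v1 v2 (pull V1 Inl P) (pull V2 g2 P)"
    proof cases
      case a
      then have "X = c" using onlyc X by simp
      then show ?thesis unfolding joinP_def C1 C2 using cen by simp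
    next
      case b
      define B1 where "B1 = V1 \<inter> Inl -` X"
      have "Inl ` B1 = X" using b Xs B1_def by auto
      moreover have "B1 \<in> pull V1 Inl P" using X Xne \<open>Inl ` B1 = X\<close> B1_def unfolding pull_def by auto
      moreover have "v1 \<notin> B1" using b B1_def by auto
      ultimately show ?thesis unfolding joinP_def by blast
    next
      case c
      define B2 where "B2 = V2 \<inter> g2 -` X"
      have "Inr ` B2 = X"
      proof (intro set_eqI iffI)
        fix z :: "'v1 + 'v2" assume "z \<in> Inr ` B2"
        then obtain w where "z = Inr w" "w \<in> V2" "g2 w \<in> X" using B2_def by auto
        moreover have "w \<noteq> v2" using c \<open>g2 w \<in> X\<close> by (auto simp: glue_vertex_def)
        ultimately show "z \<in> X" by (simp add: glue_vertex_def)
      next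
        fix z assume z: "z \<in> X"
        then obtain w where w: "z = Inr w" using c by auto
        have "z \<in> VG" using z Xs by auto
        then have "w \<in> V2" "w \<noteq> v2" using w by auto
        then show "z \<in> Inr ` B2" using B2_def z w by (auto simp: glue_vertex_def)
      qed
      moreover have "B2 \<in> pull V2 g2 P" using X Xne \<open>Inr ` B2 = X\<close> B2_def unfolding pull_def by auto
      moreover have "v2 \<notin> B2" using c B2_def by (auto simp: glue_vertex_def)
      ultimately show ?thesis unfolding joinP_def by blast
    qed
  qed
qed

lemma pull_bij:
  "bij_betw (\<lambda>P. (pull V1 Inl P, pull V2 g2 P)) {P. partition_on VG P \<and> sepP v1 P}
     ({P1. partition_on V1 P1} \<times> {P2. partition_on V2 P2})"
proof (rule bij_betw_byWitness[where f' = "\<lambda>(P1, P2). joinP v1 v2 P1 P2"])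
  show "\<forall>a\<in>{P. partition_on VG P \<and> sepP v1 P}. (case (pull V1 Inl a, pull V2 g2 a) of (P1, P2) \<Rightarrow> joinP v1 v2 P1 P2) = a"
    using join_pull by auto
  show "\<forall>a'\<in>{P1. partition_on V1 P1} \<times> {P2. partition_on V2 P2}.
          (pull V1 Inl (case a' of (P1, P2) \<Rightarrow> joinP v1 v2 P1 P2), pull V2 g2 (case a' of (P1, P2) \<Rightarrow> joinP v1 v2 P1 P2)) = a'"
    using pull_join by auto
  have h1: "Inl ` V1 \<subseteq> VG" by auto
  have h2: "g2 ` V2 \<subseteq> VG" using v1 by (auto simp: glue_vertex_def)
  show "(\<lambda>P. (pull V1 Inl P, pull V2 g2 P)) ` {P. partition_on VG P \<and> sepP v1 P}
    \<subseteq> {P1. partition_on V1 P1} \<times> {P2. partition_on V2 P2}"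
    using partition_pull[OF _ h1] partition_pull[OF _ h2] by auto
  show "(\<lambda>(P1, P2). joinP v1 v2 P1 P2) ` ({P1. partition_on V1 P1} \<times> {P2. partition_on V2 P2})
    \<subseteq> {P. partition_on VG P \<and> sepP v1 P}"
    using join_partition by auto
qed

end

theorem lemma2p12:
  fixes sc :: "complex \<Rightarrow> 'a::ring_1 \<Rightarrow> 'a"
    and \<phi> :: "'a \<Rightarrow> complex"
    and \<kappa> :: "'a list \<Rightarrow> complex"
    and T1 :: "('v1, 'e1, 'a) tgraph" and T2 :: "('v2, 'e2, 'a) tgraph"
    and v1 :: 'v1 and v2 :: 'v2
  assumes "complex_algebra sc"
    and "unital_tracial_functional sc \<phi>"
    and "free_cumulants \<phi> \<kappa>"
    and "test_graph T1" and "test_graph T2"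
    and "two_edge_connected T2"
    and "v1 \<in> tverts T1" and "v2 \<in> tverts T2"
  shows "tau \<kappa> (glue T1 v1 T2 v2) = tau \<kappa> T1 * tau \<kappa> T2"
proof -
  note tr = assms(2) and fc = assms(3) and t1 = assms(4) and t2 = assms(5) and tec = assms(6)
    and v1 = assms(7) and v2 = assms(8)
  define G where "G = glue T1 v1 T2 v2"
  define V1 where "V1 = tverts T1"
  define V2 where "V2 = tverts T2"
  define g2 where "g2 = glue_vertex v1 v2"
  have VG: "tverts G = Inl ` V1 \<union> Inr ` (V2 - {v2})" unfolding G_def V1_def V2_def by (simp add: glue_def)
  have finG: "finite (tverts G)" using t1 t2 unfolding VG V1_def V2_def by (simp add: test_graph_def wf_graph_def)
  let ?Parts = "{P. partition_on (tverts G) P}"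
  let ?Sep = "{P. partition_on (tverts G) P \<and> sepP v1 P}"
  let ?F = "\<lambda>P1 P2. tau0 \<kappa> (quot_graph T1 P1) * tau0 \<kappa> (quot_graph T2 P2)"
  have "tau \<kappa> G = (\<Sum>P\<in>?Parts. tau0 \<kappa> (quot_graph G P))" by (simp add: tau_def)
  also have "\<dots> = (\<Sum>P\<in>?Sep. tau0 \<kappa> (quot_graph G P))"
  proof (rule sum.mono_neutral_right)
    show "finite ?Parts" by (rule finitely_many_partition_on[OF finG])
    show "?Sep \<subseteq> ?Parts" by auto
    show "\<forall>P\<in>?Parts - ?Sep. tau0 \<kappa> (quot_graph G P) = 0"
      using tau0_nonsep[OF t1 t2 tec v1 v2] unfolding G_def by auto
  qed
  also have "\<dots> = (\<Sum>P\<in>?Sep. ?F (pull V1 Inl P) (pull V2 g2 P))"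
  proof (rule sum.cong[OF refl])
    fix P assume "P \<in> ?Sep"
    then show "tau0 \<kappa> (quot_graph G P) = ?F (pull V1 Inl P) (pull V2 g2 P)"
      using tau0_sep[OF t1 t2 tec v1 v2 _ _ tr fc] unfolding G_def V1_def V2_def g2_def by auto
  qed
  also have "\<dots> = (\<Sum>Q\<in>{P1. partition_on V1 P1} \<times> {P2. partition_on V2 P2}. case Q of (P1, P2) \<Rightarrow> ?F P1 P2)"
  proof -
    have bij: "bij_betw (\<lambda>P. (pull V1 Inl P, pull V2 g2 P)) ?Sep
         ({P1. partition_on V1 P1} \<times> {P2. partition_on V2 P2})"
      using pull_bij[of v1 V1 v2 V2] v1 v2 unfolding VG V1_def V2_def g2_def by simp
    show ?thesis using sum.reindex_bij_betw[OF bij, of "\<lambda>Q. case Q of (P1, P2) \<Rightarrow> ?F P1 P2"] by simp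
  qed
  also have "\<dots> = (\<Sum>P1\<in>{P1. partition_on V1 P1}. \<Sum>P2\<in>{P2. partition_on V2 P2}. ?F P1 P2)"
    by (rule sum.cartesian_product[symmetric])
  also have "\<dots> = tau \<kappa> T1 * tau \<kappa> T2"
    unfolding tau_def V1_def V2_def by (simp add: sum_product)
  finally show ?thesis unfolding G_def .
qed

end
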